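(* Assume $\alpha=\beta$, let $\mathbf U$ with multiplier $\Lambda$ be the similarity profile, and let $\mathbf u$ be a solution of the scaled system with finite initial relative entropy (of the respective order). Then for all $\tau>0$: (i) if $\alpha\ge2$: $\frac{\mathrm d}{\mathrm d\tau}\mathcal E_{\alpha-1}(\mathbf u|\mathbf U)\le-\frac12\mathcal E_{\alpha-1}(\mathbf u|\mathbf U)+e^{-\tau}\int_{\mathbb R}\frac{\Lambda^2}{4kU^\alpha}\mathrm dy$; (ii) if $\alpha=1$: $\frac{\mathrm d}{\mathrm d\tau}\mathcal E_{1/2}(\mathbf u|\mathbf U)\le-\big(\frac12-\tilde\mu_*\big)\mathcal E_{1/2}(\mathbf u|\mathbf U)+e^{-\tau}\int_{\mathbb R}\frac{11+\sqrt2}{14k}\frac{\Lambda^2}{U}\mathrm dy$, where $\tilde\mu_*=\|\Lambda/U\|_{L^\infty}^2/(k\sqrt8)$.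
   Context: Fix $d_1,d_2,k>0$, real stoichiometric coefficients $\alpha,\beta\ge1$ and $A_-,A_+>0$. The similarity profile is a triple $(U,V,\Lambda)$ with $U,V\in\mathrm C^2(\mathbb R)$ positive, bounded and bounded away from $0$, $\Lambda:\mathbb R\to\mathbb R$, satisfying $d_1U''+\tfrac y2U'+\alpha\Lambda=0$, $d_2V''+\tfrac y2V'-\beta\Lambda=0$, $U^\alpha=V^\beta$ on $\mathbb R$, and $U(\pm\infty)=A_\pm^\beta$, $V(\pm\infty)=A_\pm^\alpha$. The scaled system is $u_\tau=d_1u_{yy}+\tfrac y2u_y+e^\tau\alpha k(v^\beta-u^\alpha)$, $v_\tau=d_2v_{yy}+\tfrac y2v_y-e^\tau\beta k(v^\beta-u^\alpha)$ for $\tau>0$, $y\in\mathbb R$, with $(u,v)(\tau,\pm\infty)=(A_\pm^\beta,A_\pm^\alpha)$. A "solution" is a positive classical solution for which the relative entropy is finite and differentiable in $\tau$ with differentiation under the integral allowed, all integrals appearing are finite, and integrations by parts over $\mathbb R$ produce no boundary terms ($\rho,\zeta\to1$ at $\pm\infty$ with sufficient decay). Relative densities $\rho=u/U$, $\zeta=v/V$. Entropy functions: $F_p(z)=\frac{1}{p(p-1)}(z^p-pz+p-1)$ for $p\notin\{0,1\}$, $F_1(z)=z\log z-z+1$. Relative entropy $\mathcal E_p(\mathbf u|\mathbf U)=\int_{\mathbb R}\big(UF_p(\rho)+VF_p(\zeta)\big)\mathrm dy$. $\|\cdot\|_{L^\infty}$ is the supremum of the absolute value. *)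

theory Defs
  imports "HOL-Analysis.Analysis"
begin

text \<open>F_p(z) = (z^p - p z + p - 1)/(p(p-1)) for p not in {0,1}; F_1(z) = z log z - z + 1.
  (The case p = 0 is never used.)\<close>
definition Fp :: "real \<Rightarrow> real \<Rightarrow> real" where
  "Fp p z = (if p = 1 then z * ln z - z + 1
             else (z powr p - p * z + p - 1) / (p * (p - 1)))"

definition rel_entropy ::
  "real \<Rightarrow> (real \<Rightarrow> real) \<Rightarrow> (real \<Rightarrow> real) \<Rightarrow> (real \<Rightarrow> real) \<Rightarrow> (real \<Rightarrow> real) \<Rightarrow> real" where
  "rel_entropy p U V u v =
     (LINT y|lborel. U y * Fp p (u y / U y) + V y * Fp p (v y / V y))"

definition entropy_density ::
  "real \<Rightarrow> (real \<Rightarrow> real) \<Rightarrow> (real \<Rightarrow> real) \<Rightarrow> (real \<Rightarrow> real) \<Rightarrow> (real \<Rightarrow> real) \<Rightarrow> real \<Rightarrow> real" where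
  "entropy_density p U V u v y = U y * Fp p (u y / U y) + V y * Fp p (v y / V y)"

definition C2 :: "(real \<Rightarrow> real) \<Rightarrow> bool" where
  "C2 f \<longleftrightarrow> (\<forall>y. f differentiable (at y)) \<and> (\<forall>y. deriv f differentiable (at y))
            \<and> continuous_on UNIV (deriv (deriv f))"

definition similarity_profile ::
  "real \<Rightarrow> real \<Rightarrow> real \<Rightarrow> real \<Rightarrow> real \<Rightarrow> real \<Rightarrow>
   (real \<Rightarrow> real) \<Rightarrow> (real \<Rightarrow> real) \<Rightarrow> (real \<Rightarrow> real) \<Rightarrow> bool" where
  "similarity_profile d1 d2 \<alpha> \<beta> Am Ap U V \<Lambda> \<longleftrightarrow>
     C2 U \<and> C2 V \<and>
     (\<exists>c C. 0 < c \<and> (\<forall>y. c \<le> U y \<and> U y \<le> C \<and> c \<le> V y \<and> V y \<le> C)) \<and>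
     (\<forall>y. d1 * deriv (deriv U) y + y / 2 * deriv U y + \<alpha> * \<Lambda> y = 0) \<and>
     (\<forall>y. d2 * deriv (deriv V) y + y / 2 * deriv V y - \<beta> * \<Lambda> y = 0) \<and>
     (\<forall>y. U y powr \<alpha> = V y powr \<beta>) \<and>
     (U \<longlongrightarrow> Am powr \<beta>) at_bot \<and> (U \<longlongrightarrow> Ap powr \<beta>) at_top \<and>
     (V \<longlongrightarrow> Am powr \<alpha>) at_bot \<and> (V \<longlongrightarrow> Ap powr \<alpha>) at_top"

definition dtau :: "(real \<Rightarrow> real \<Rightarrow> real) \<Rightarrow> real \<Rightarrow> real \<Rightarrow> real" where
  "dtau w t y = deriv (\<lambda>s. w s y) t"

definition dy :: "(real \<Rightarrow> real \<Rightarrow> real) \<Rightarrow> real \<Rightarrow> real \<Rightarrow> real" where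
  "dy w t y = deriv (\<lambda>z. w t z) y"

definition dyy :: "(real \<Rightarrow> real \<Rightarrow> real) \<Rightarrow> real \<Rightarrow> real \<Rightarrow> real" where
  "dyy w t y = deriv (\<lambda>z. dy w t z) y"

definition classical :: "(real \<Rightarrow> real \<Rightarrow> real) \<Rightarrow> bool" where
  "classical w \<longleftrightarrow>
     (\<forall>t>0. \<forall>y. (\<lambda>s. w s y) differentiable (at t) \<and> (\<lambda>z. w t z) differentiable (at y)
                 \<and> (\<lambda>z. dy w t z) differentiable (at y)) \<and>
     continuous_on ({0<..} \<times> UNIV) (\<lambda>(t, y). w t y) \<and>
     continuous_on ({0<..} \<times> UNIV) (\<lambda>(t, y). dtau w t y) \<and>
     continuous_on ({0<..} \<times> UNIV) (\<lambda>(t, y). dy w t y) \<and>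
     continuous_on ({0<..} \<times> UNIV) (\<lambda>(t, y). dyy w t y)"

text \<open>"Sufficient decay": a function tends to 0 at +-oo faster than any power of |y|.\<close>
definition rapid_decay :: "(real \<Rightarrow> real) \<Rightarrow> bool" where
  "rapid_decay f \<longleftrightarrow>
     (\<forall>n::nat. ((\<lambda>y. \<bar>y\<bar> ^ n * f y) \<longlongrightarrow> 0) at_top \<and>
               ((\<lambda>y. \<bar>y\<bar> ^ n * f y) \<longlongrightarrow> 0) at_bot)"

text \<open>A solution of the scaled system (for the relative entropy of order p):
  a positive classical solution with the boundary conditions, such that the
  relative entropy of order p is finite for tau >= 0, differentiable in tau for
  tau > 0 with differentiation under the integral sign allowed, and such that
  the relative densities rho = u/U, zeta = v/V tend to 1 at +-oo together with
  their first and second y-derivatives with rapid decay (so that integrations by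
  parts over R produce no boundary terms and the integrals appearing are finite).\<close>
definition scaled_solution ::
  "real \<Rightarrow> real \<Rightarrow> real \<Rightarrow> real \<Rightarrow> real \<Rightarrow> real \<Rightarrow> real \<Rightarrow>
   (real \<Rightarrow> real) \<Rightarrow> (real \<Rightarrow> real) \<Rightarrow> real \<Rightarrow>
   (real \<Rightarrow> real \<Rightarrow> real) \<Rightarrow> (real \<Rightarrow> real \<Rightarrow> real) \<Rightarrow> bool" where
  "scaled_solution d1 d2 k \<alpha> \<beta> Am Ap U V p u v \<longleftrightarrow>
     classical u \<and> classical v \<and>
     (\<forall>t\<ge>0. \<forall>y. 0 < u t y \<and> 0 < v t y) \<and>
     (\<forall>t>0. \<forall>y.
        dtau u t y = d1 * dyy u t y + y / 2 * dy u t y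
                     + exp t * \<alpha> * k * (v t y powr \<beta> - u t y powr \<alpha>) \<and>
        dtau v t y = d2 * dyy v t y + y / 2 * dy v t y
                     - exp t * \<beta> * k * (v t y powr \<beta> - u t y powr \<alpha>)) \<and>
     (\<forall>t>0. (u t \<longlongrightarrow> Am powr \<beta>) at_bot \<and> (u t \<longlongrightarrow> Ap powr \<beta>) at_top \<and>
            (v t \<longlongrightarrow> Am powr \<alpha>) at_bot \<and> (v t \<longlongrightarrow> Ap powr \<alpha>) at_top) \<and>
     (\<forall>t\<ge>0. integrable lborel (entropy_density p U V (u t) (v t))) \<and>
     (\<forall>t>0. integrable lborel (\<lambda>y. deriv (\<lambda>s. entropy_density p U V (u s) (v s) y) t) \<and>
            ((\<lambda>s. rel_entropy p U V (u s) (v s)) has_real_derivative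
               (LINT y|lborel. deriv (\<lambda>s. entropy_density p U V (u s) (v s) y) t)) (at t)) \<and>
     (\<forall>t>0.
        rapid_decay (\<lambda>y. u t y / U y - 1) \<and> rapid_decay (\<lambda>y. v t y / V y - 1) \<and>
        rapid_decay (dy (\<lambda>s z. u s z / U z) t) \<and> rapid_decay (dy (\<lambda>s z. v s z / V z) t) \<and>
        rapid_decay (dyy (\<lambda>s z. u s z / U z) t) \<and> rapid_decay (dyy (\<lambda>s z. v s z / V z) t))"

end

theory Submission
  imports Defs "HOL-Probability.Distributions"
begin


definition F1 :: "real \<Rightarrow> real \<Rightarrow> real" where
  "F1 p z = (if p = 1 then ln z else (z powr (p - 1) - 1) / (p - 1))"
definition F2 :: "real \<Rightarrow> real \<Rightarrow> real" where
  "F2 p z = z powr (p - 2)"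

lemma Fp_deriv:
  assumes "p \<noteq> 0" "0 < z"
  shows "(Fp p has_real_derivative F1 p z) (at z)"
proof (cases "p = 1")
  case True
  have d: "((\<lambda>z. z * ln z - z + 1) has_real_derivative ln z) (at z)"
    using assms by (auto intro!: derivative_eq_intros)
  have "Fp p = (\<lambda>z. z * ln z - z + 1)" using True by (auto simp: Fp_def[abs_def])
  moreover have "F1 p z = ln z" using True by (simp add: F1_def)
  ultimately show ?thesis using d by simp
next
  case False
  have "((\<lambda>z. (z powr p - p * z + p - 1) / (p * (p - 1))) has_real_derivative
        ((p * z powr (p - 1) - p * 1 + 0 - 0) / (p * (p - 1)))) (at z)"
    using assms False by (auto intro!: derivative_eq_intros)
  moreover have "(p * z powr (p - 1) - p * 1 + 0 - 0) / (p * (p - 1)) = F1 p z"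
    using False assms by (simp add: F1_def field_simps)
  moreover have "Fp p = (\<lambda>z. (z powr p - p * z + p - 1) / (p * (p - 1)))"
    using False by (auto simp: Fp_def[abs_def])
  ultimately show ?thesis by simp
qed

lemma F1_deriv:
  assumes "0 < z"
  shows "(F1 p has_real_derivative F2 p z) (at z)"
proof (cases "p = 1")
  case True
  have "(ln has_real_derivative 1 / z) (at z)" using assms by (auto intro!: derivative_eq_intros)
  moreover have "1 / z = z powr (1 - 2)" using assms by (simp add: powr_minus divide_inverse)
  ultimately show ?thesis using True unfolding F1_def[abs_def] F2_def by simp
next
  case False
  have "((\<lambda>z. (z powr (p - 1) - 1) / (p - 1)) has_real_derivative
        (((p - 1) * z powr (p - 1 - 1) - 0) / (p - 1))) (at z)"
    using assms by (auto intro!: derivative_eq_intros)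
  moreover have "((p - 1) * z powr (p - 1 - 1) - 0) / (p - 1) = F2 p z"
    using False by (simp add: F2_def)
  moreover have "F1 p = (\<lambda>z. (z powr (p - 1) - 1) / (p - 1))"
    using False by (auto simp: F1_def[abs_def])
  ultimately show ?thesis by simp
qed

lemma F2_nonneg: "0 \<le> F2 p z" by (simp add: F2_def)

lemma H_eq:
  assumes "p \<noteq> 0" "0 < z"
  shows "z * F1 p z - Fp p z = (z powr p - 1) / p"
proof (cases "p = 1")
  case True then show ?thesis using assms by (simp add: F1_def Fp_def)
next
  case False
  have e: "z * z powr (p - 1) = z powr p" using assms by (simp add: powr_mult_base)
  have "z * F1 p z = (z powr p - z) / (p - 1)"
    using False e by (simp add: F1_def field_simps)
  moreover have "Fp p z = (z powr p - p * z + p - 1) / (p * (p - 1))" using False by (simp add: Fp_def)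
  ultimately have e1: "(p - 1) * (z * F1 p z) = z powr p - z"
    and e2: "p * (p - 1) * Fp p z = z powr p - p * z + p - 1" using False assms by simp_all
  have "(p - 1) * (p * (z * F1 p z) - p * Fp p z) = p * ((p - 1) * (z * F1 p z)) - p * (p - 1) * Fp p z"
    by (simp add: algebra_simps)
  also have "\<dots> = (p - 1) * (z powr p - 1)" unfolding e1 e2 by (simp add: algebra_simps)
  finally have "(p - 1) * (p * (z * F1 p z) - p * Fp p z) = (p - 1) * (z powr p - 1)" .
  then have "p * (z * F1 p z) - p * Fp p z = z powr p - 1" using False by simp
  then have "p * (z * F1 p z - Fp p z) = z powr p - 1" by (simp add: algebra_simps)
  then show ?thesis using assms by (simp add: field_simps)
qed

lemma Fp_1[simp]: "Fp p 1 = 0" by (simp add: Fp_def)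
lemma F1_1[simp]: "F1 p 1 = 0" by (simp add: F1_def)




lemma aux: "(a::real) \<noteq> 0 \<Longrightarrow> b \<noteq> 0 \<Longrightarrow> l^2*(a*(w*x^2))/a - 2*l*(b*(w*x))/b + w = w*(l*x-1)^2"
  by (simp add: power2_eq_square algebra_simps)

lemma psi_mono:
  fixes l a b \<alpha> :: real
  assumes "2 \<le> \<alpha>" "0 < a" "a \<le> b"
  shows "l^2 * a powr \<alpha> / \<alpha> - 2 * l * a powr (\<alpha>-1) / (\<alpha>-1) + F1 (\<alpha>-1) a
       \<le> l^2 * b powr \<alpha> / \<alpha> - 2 * l * b powr (\<alpha>-1) / (\<alpha>-1) + F1 (\<alpha>-1) b"
proof (rule DERIV_nonneg_imp_nondecreasing[OF assms(3)])
  fix x assume x: "a \<le> x" "x \<le> b"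
  then have xp: "0 < x" using assms by simp
  have "((\<lambda>x. l^2 * x powr \<alpha> / \<alpha> - 2 * l * x powr (\<alpha>-1) / (\<alpha>-1) + F1 (\<alpha>-1) x) has_real_derivative
     (l^2 * (\<alpha> * x powr (\<alpha> - 1)) / \<alpha> - 2 * l * ((\<alpha>-1) * x powr (\<alpha>-1-1)) / (\<alpha>-1) + F2 (\<alpha>-1) x)) (at x)"
    using xp by (intro DERIV_add DERIV_diff DERIV_cdivide DERIV_cmult has_real_derivative_powr F1_deriv)
  moreover have "l^2 * (\<alpha> * x powr (\<alpha> - 1)) / \<alpha> - 2 * l * ((\<alpha>-1) * x powr (\<alpha>-1-1)) / (\<alpha>-1) + F2 (\<alpha>-1) x
      = x powr (\<alpha> - 3) * (l * x - 1)^2"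
  proof -
    have "x powr (\<alpha> - 1) = x powr ((\<alpha> - 3) + 2)" by simp
    also have "\<dots> = x powr (\<alpha> - 3) * x powr 2" by (rule powr_add)
    finally have e1: "x powr (\<alpha> - 1) = x powr (\<alpha> - 3) * x^2" using xp by (simp add: powr_numeral)
    have "x powr (\<alpha> - 1 - 1) = x powr ((\<alpha> - 3) + 1)" by simp
    also have "\<dots> = x powr (\<alpha> - 3) * x powr 1" by (rule powr_add)
    finally have e2: "x powr (\<alpha> - 1 - 1) = x powr (\<alpha> - 3) * x" using xp by simp
    have e3: "F2 (\<alpha>-1) x = x powr (\<alpha> - 3)" by (simp add: F2_def)
    have a0: "\<alpha> \<noteq> 0" "\<alpha> - 1 \<noteq> 0" using assms by auto
    show ?thesis unfolding e1 e2 e3 using aux[OF a0] .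
  qed
  ultimately show "\<exists>y. ((\<lambda>x. l^2 * x powr \<alpha> / \<alpha> - 2 * l * x powr (\<alpha>-1) / (\<alpha>-1) + F1 (\<alpha>-1) x) has_real_derivative y) (at x) \<and> 0 \<le> y"
    by auto
qed

lemma KI_le:
  fixes a b \<alpha> :: real
  assumes "2 \<le> \<alpha>" "0 < a" "a \<le> b"
  shows "((b powr (\<alpha>-1) - a powr (\<alpha>-1))/(\<alpha>-1))^2 \<le> ((b powr \<alpha> - a powr \<alpha>)/\<alpha>) * (F1 (\<alpha>-1) b - F1 (\<alpha>-1) a)"
proof (cases "a = b")
  case True then show ?thesis by simp
next
  case False
  define A where "A = (b powr \<alpha> - a powr \<alpha>)/\<alpha>"
  define B where "B = (b powr (\<alpha>-1) - a powr (\<alpha>-1))/(\<alpha>-1)"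
  define C where "C = F1 (\<alpha>-1) b - F1 (\<alpha>-1) a"
  have "a < b" using False assms by simp
  then have "a powr \<alpha> < b powr \<alpha>" using assms by (simp add: powr_less_mono2)
  then have Ap: "0 < A" using assms by (simp add: A_def)
  have "\<And>l. 0 \<le> l^2 * A - 2 * l * B + C"
  proof -
    fix l
    have "l^2 * A - 2 * l * B + C = (l^2 * b powr \<alpha> / \<alpha> - 2 * l * b powr (\<alpha>-1) / (\<alpha>-1) + F1 (\<alpha>-1) b)
       - (l^2 * a powr \<alpha> / \<alpha> - 2 * l * a powr (\<alpha>-1) / (\<alpha>-1) + F1 (\<alpha>-1) a)"
      unfolding A_def B_def C_def by (simp add: diff_divide_distrib algebra_simps)
    then show "0 \<le> l^2 * A - 2 * l * B + C"
      using psi_mono[OF assms, of l] by linarith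
  qed
  from this[of "B / A"] have "0 \<le> (B/A)^2 * A - 2 * (B/A) * B + C" .
  also have "(B/A)^2 * A - 2 * (B/A) * B + C = C - B^2 / A" using Ap by (simp add: field_simps power2_eq_square)
  finally have "B^2 / A \<le> C" by simp
  then have "B^2 \<le> A * C" using Ap by (simp add: field_simps)
  then show ?thesis unfolding A_def B_def C_def .
qed

lemma swap_prod: "((x::real) - y) / c * (u - v) = (y - x) / c * (v - u)"
  by (metis minus_diff_eq minus_divide_left mult_minus_left mult_minus_right)

lemma KI:
  fixes a b \<alpha> :: real
  assumes "2 \<le> \<alpha>" "0 < a" "0 < b"
  shows "((b powr (\<alpha>-1) - a powr (\<alpha>-1))/(\<alpha>-1))^2 \<le> ((b powr \<alpha> - a powr \<alpha>)/\<alpha>) * (F1 (\<alpha>-1) b - F1 (\<alpha>-1) a)"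
proof (cases "a \<le> b")
  case True then show ?thesis using KI_le assms by blast
next
  case False
  then have "((a powr (\<alpha>-1) - b powr (\<alpha>-1))/(\<alpha>-1))^2 \<le> ((a powr \<alpha> - b powr \<alpha>)/\<alpha>) * (F1 (\<alpha>-1) a - F1 (\<alpha>-1) b)"
    using KI_le assms by simp
  moreover have "((a powr (\<alpha>-1) - b powr (\<alpha>-1))/(\<alpha>-1))^2 = ((b powr (\<alpha>-1) - a powr (\<alpha>-1))/(\<alpha>-1))^2"
    by (metis minus_diff_eq minus_divide_left power2_minus)
  moreover have "((a powr \<alpha> - b powr \<alpha>)/\<alpha>) * (F1 (\<alpha>-1) a - F1 (\<alpha>-1) b) = ((b powr \<alpha> - a powr \<alpha>)/\<alpha>) * (F1 (\<alpha>-1) b - F1 (\<alpha>-1) a)"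
    by (rule swap_prod)
  ultimately show ?thesis by linarith
qed




lemma young: "(0::real) < s \<Longrightarrow> c * x - s * x^2 \<le> c^2 / (4 * s)"
proof -
  assume s: "0 < s"
  have "c^2 / (4 * s) - (c * x - s * x^2) = (c - 2 * s * x)^2 / (4 * s)"
    using s by (simp add: field_simps power2_eq_square)
  also have "\<dots> \<ge> 0" using s by simp
  finally show ?thesis by simp
qed

lemma react1:
  fixes \<alpha> k Uy r z E L :: real
  assumes "2 \<le> \<alpha>" "0 < k" "0 < Uy" "0 < r" "0 < z" "0 < E"
  shows "\<alpha> * L * ((z powr (\<alpha>-1) - r powr (\<alpha>-1)) / (\<alpha>-1))
     + E * \<alpha> * k * (Uy powr \<alpha> * z powr \<alpha> - Uy powr \<alpha> * r powr \<alpha>) * (F1 (\<alpha>-1) r - F1 (\<alpha>-1) z)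
     \<le> L^2 / (4 * k * Uy powr \<alpha>) / E"
proof -
  define A where "A = (z powr \<alpha> - r powr \<alpha>)/\<alpha>"
  define B where "B = (z powr (\<alpha>-1) - r powr (\<alpha>-1))/(\<alpha>-1)"
  define C where "C = F1 (\<alpha>-1) z - F1 (\<alpha>-1) r"
  define s where "s = E * \<alpha>^2 * k * Uy powr \<alpha>"
  have s: "0 < s" using assms by (simp add: s_def)
  have ki: "B^2 \<le> A * C" using KI[OF assms(1) assms(4) assms(5)] unfolding A_def B_def C_def .
  have eq: "E * \<alpha> * k * (Uy powr \<alpha> * z powr \<alpha> - Uy powr \<alpha> * r powr \<alpha>) * (F1 (\<alpha>-1) r - F1 (\<alpha>-1) z)
     = - s * (A * C)"
    using assms unfolding s_def A_def C_def by (simp add: field_simps power2_eq_square)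
  have "- s * (A * C) \<le> - s * B^2" using ki s by simp
  then have "\<alpha> * L * B + E * \<alpha> * k * (Uy powr \<alpha> * z powr \<alpha> - Uy powr \<alpha> * r powr \<alpha>) * (F1 (\<alpha>-1) r - F1 (\<alpha>-1) z)
      \<le> (\<alpha> * L) * B - s * B^2" using eq by simp
  also have "\<dots> \<le> (\<alpha> * L)^2 / (4 * s)" by (rule young[OF s])
  also have "(\<alpha> * L)^2 / (4 * s) = L^2 / (4 * k * Uy powr \<alpha>) / E"
    using assms unfolding s_def by (simp add: field_simps power2_eq_square)
  finally show ?thesis unfolding B_def .
qed




lemma poly2:
  fixes a b :: real
  shows "(a+b)/8 \<le> sqrt 2 * ((a-1)^2+(b-1)^2)/2 + (11 + sqrt 2)/14"
proof -
  have s: "7/5 \<le> sqrt (2::real)" by (rule real_le_rsqrt) (simp add: power2_eq_square)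
  have e1: "(56*a-61)^2 + (56*b-61)^2 = 3136*(a*a) + 3136*(b*b) - 6832*a - 6832*b + 7442"
    by (simp add: power2_eq_square algebra_simps)
  have h: "0 \<le> (56*a-61)^2 + (56*b-61)^2" by simp
  have e2: "(a-1)^2+(b-1)^2 = a*a + b*b - 2*a - 2*b + 2" by (simp add: power2_eq_square algebra_simps)
  have h2: "(a+b)/8 \<le> 7/5 * ((a-1)^2+(b-1)^2)/2 + (11 + 7/5)/14"
    using h unfolding e1 e2 by (simp add: field_simps)
  define Q where "Q = (a-1)^2+(b-1)^2"
  have Q: "0 \<le> Q" by (simp add: Q_def)
  have "7/5 * Q \<le> sqrt 2 * Q"
    by (rule mult_right_mono[OF s Q])
  then show ?thesis using h2 s unfolding Q_def[symmetric] by (simp add: field_simps)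
qed

lemma sq2: "(k::real) \<noteq> 0 \<Longrightarrow> W*U/k*(sqrt 2 * Q/2) = W/(2* sqrt 2*k)*(2*U*Q)"
proof -
  assume k: "k \<noteq> 0"
  have s: "sqrt 2 * sqrt 2 = (2::real)" by simp
  have "W*U/k*(sqrt 2 * Q/2) = W*U*Q*(sqrt 2 * sqrt 2)/(2* sqrt 2*k)" using k by (simp add: field_simps)
  also have "\<dots> = W/(2* sqrt 2*k)*(2*U*Q)" unfolding s by (simp add: field_simps)
  finally show ?thesis .
qed

lemma react2core:
  fixes a b k U E w \<mu> :: real
  assumes a: "0 < a" and b: "0 < b" and k: "0 < k" and U: "0 < U" and E: "1 \<le> E"
    and mu: "w^2 / (2 * sqrt 2 * k) \<le> \<mu>"
  shows "2*(w*U)*(b-a) - 2*E*k*U*((a+b)/(a*b))*(b-a)^2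
     \<le> \<mu>*(2*U*((a-1)^2+(b-1)^2)) + (1/E)*((11+sqrt 2)/(14*k)*(w^2*U))"
proof -
  define c where "c = (a+b)/(a*b)"
  have c: "0 < c" using a b by (simp add: c_def)
  have E0: "0 < E" using E by simp
  have sg: "0 < 2*E*k*U*c" using c k U E0 by simp
  have "2*(w*U)*(b-a) - 2*E*k*U*c*(b-a)^2 \<le> (2*(w*U))^2/(4*(2*E*k*U*c))"
    by (rule young[OF sg])
  also have "\<dots> = w^2*U/(2*E*k) * (1/c)"
    using c k U E0 by (simp add: field_simps power2_eq_square)
  also have "\<dots> = w^2*U/(2*E*k) * (a*b/(a+b))" by (simp add: c_def)
  also have "\<dots> \<le> w^2*U/(2*E*k) * ((a+b)/4)"
  proof (rule mult_left_mono)
    have "0 \<le> (a-b)^2" by simp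
    moreover have "(a-b)^2 = a*a + b*b - 2*(a*b)" by (simp add: power2_eq_square algebra_simps)
    moreover have "(a+b)^2 = a*a + b*b + 2*(a*b)" by (simp add: power2_eq_square algebra_simps)
    ultimately have "4*(a*b) \<le> (a+b)*(a+b)" unfolding power2_eq_square by linarith
    then show "a*b/(a+b) \<le> (a+b)/4" using a b by (simp add: field_simps)
    show "0 \<le> w^2*U/(2*E*k)" using U E0 k by simp
  qed
  also have "\<dots> = w^2*U/(E*k) * ((a+b)/8)" by (simp add: field_simps)
  also have "\<dots> \<le> w^2*U/(E*k) * (sqrt 2 * ((a-1)^2+(b-1)^2)/2 + (11 + sqrt 2)/14)"
    by (rule mult_left_mono[OF poly2]) (use U E0 k in simp)
  also have "\<dots> = w^2*U/(E*k) * (sqrt 2 * ((a-1)^2+(b-1)^2)/2) + (1/E)*((11+sqrt 2)/(14*k)*(w^2*U))"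
    using E0 k by (simp add: field_simps)
  also have "w^2*U/(E*k) * (sqrt 2 * ((a-1)^2+(b-1)^2)/2) \<le> w^2*U/k * (sqrt 2 * ((a-1)^2+(b-1)^2)/2)"
  proof -
    have "w^2*U/(E*k) \<le> w^2*U/k"
      proof (rule frac_le)
      show "0 \<le> w^2*U" using U by simp
      show "k \<le> E * k" using E k by simp
    qed (use k in auto)
    then show ?thesis by (rule mult_right_mono) simp
  qed
  also have "w^2*U/k * (sqrt 2 * ((a-1)^2+(b-1)^2)/2) = w^2 / (2 * sqrt 2 * k) * (2*U*((a-1)^2+(b-1)^2))"
    using sq2 k by simp
  also have "\<dots> \<le> \<mu>*(2*U*((a-1)^2+(b-1)^2))"
    by (rule mult_right_mono[OF mu]) (use U in simp)
  finally show ?thesis unfolding c_def by simp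
qed




context
  fixes d1 d2 \<alpha> Am Ap :: real and U V \<Lambda> :: "real \<Rightarrow> real"
  assumes d1: "0 < d1" and d2: "0 < d2" and al: "1 \<le> \<alpha>"
    and prof: "similarity_profile d1 d2 \<alpha> \<alpha> Am Ap U V \<Lambda>"
begin

lemma prof_bounds: "\<exists>c C. 0 < c \<and> (\<forall>y. c \<le> U y \<and> U y \<le> C \<and> c \<le> V y \<and> V y \<le> C)"
  using prof unfolding similarity_profile_def by blast

lemma prof_Upos: "0 < U y" "0 < V y"
  using prof_bounds by (meson less_le_trans)+

lemma prof_VU: "V = U"
proof
  fix y
  have "U y powr \<alpha> = V y powr \<alpha>" using prof unfolding similarity_profile_def by blast
  then have "(U y powr \<alpha>) powr (1/\<alpha>) = (V y powr \<alpha>) powr (1/\<alpha>)" by simp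
  then show "V y = U y" using al prof_Upos[of y] by (simp add: powr_powr)
qed

lemma prof_C2: "C2 U" using prof unfolding similarity_profile_def by blast

lemma prof_d1: "(U has_real_derivative deriv U y) (at y)"
  using prof_C2 unfolding C2_def by (simp add: DERIV_deriv_iff_real_differentiable)

lemma prof_d2: "(deriv U has_real_derivative deriv (deriv U) y) (at y)"
  using prof_C2 unfolding C2_def by (simp add: DERIV_deriv_iff_real_differentiable)

lemma prof_cont2: "continuous_on UNIV (deriv (deriv U))"
  using prof_C2 unfolding C2_def by blast

lemma prof_contU: "continuous_on UNIV U"
  using prof_d1 by (meson DERIV_isCont continuous_at_imp_continuous_on)

lemma prof_eqU: "d1 * deriv (deriv U) y + y / 2 * deriv U y + \<alpha> * \<Lambda> y = 0"
  using prof unfolding similarity_profile_def by blast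

lemma prof_eqV: "d2 * deriv (deriv U) y + y / 2 * deriv U y - \<alpha> * \<Lambda> y = 0"
  using prof prof_VU unfolding similarity_profile_def by blast

lemma prof_Lam: "\<Lambda> y = (d2 - d1) * deriv (deriv U) y / (2 * \<alpha>)"
proof -
  have "(d1 - d2) * deriv (deriv U) y + 2 * \<alpha> * \<Lambda> y = 0"
    using prof_eqU[of y] prof_eqV[of y] by (simp add: algebra_simps)
  then show ?thesis using al by (simp add: field_simps)
qed

lemma prof_U1: "deriv U y = deriv U 0 * exp (- (y^2) / (2 * (d1 + d2)))"
proof -
  define D where "D = d1 + d2"
  have D: "0 < D" using d1 d2 by (simp add: D_def)
  define g where "g y = deriv U y * exp (y^2 / (2 * D))" for y
  have gd: "DERIV g x :> 0" for x
  proof -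
    have "DERIV g x :> deriv (deriv U) x * exp (x^2 / (2 * D)) + deriv U x * (exp (x^2 / (2 * D)) * (2 * x ^ 1 * 1 / (2 * D)))"
      unfolding g_def[abs_def] using D
      by (auto intro!: derivative_eq_intros prof_d2)
    moreover have "D * deriv (deriv U) x + x * deriv U x = 0"
      using prof_eqU[of x] prof_eqV[of x] unfolding D_def by (simp add: algebra_simps)
    moreover have "deriv (deriv U) x * exp (x^2 / (2 * D)) + deriv U x * (exp (x^2 / (2 * D)) * (2 * x ^ 1 * 1 / (2 * D)))
       = exp (x^2 / (2 * D)) / D * (D * deriv (deriv U) x + x * deriv U x)"
      using D by (simp add: field_simps)
    ultimately show ?thesis by simp
  qed
  have "g y = g 0" using DERIV_isconst_all[of g] gd by blast
  then have "deriv U y * exp (y^2 / (2 * D)) = deriv U 0" by (simp add: g_def)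
  then have "deriv U y = deriv U 0 / exp (y^2 / (2 * D))" by (simp add: field_simps)
  then show ?thesis by (simp add: D_def exp_minus divide_inverse)
qed

lemma prof_U2: "deriv (deriv U) y = - (y / (d1 + d2)) * deriv U 0 * exp (- (y^2) / (2 * (d1 + d2)))"
proof -
  have "(d1 + d2) * deriv (deriv U) y + y * deriv U y = 0"
    using prof_eqU[of y] prof_eqV[of y] by (simp add: algebra_simps)
  then have "deriv (deriv U) y = - (y / (d1 + d2)) * deriv U y" using d1 d2 by (simp add: field_simps)
  then show ?thesis using prof_U1[of y] by simp
qed

lemma texp_bound: fixes D y :: real shows "0 < D \<Longrightarrow> \<bar>y\<bar> * exp (- (y^2) / (2 * D)) \<le> 1 + 2 * D"
proof -
  assume D: "0 < D"
  define t where "t = y^2 / (2 * D)"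
  have t: "0 \<le> t" using D by (simp add: t_def)
  have "t \<le> exp t" using exp_ge_add_one_self[of t] by linarith
  then have "t * exp (- t) \<le> 1" by (simp add: exp_minus field_simps)
  then have h1: "y^2 * exp (- t) \<le> 2 * D" using D by (simp add: t_def field_simps)
  have "\<bar>y\<bar> \<le> 1 + y^2"
  proof (cases "\<bar>y\<bar> \<le> 1")
    case True then show ?thesis by (simp add: add_increasing2)
  next
    case False
    then have "\<bar>y\<bar> * 1 \<le> \<bar>y\<bar> * \<bar>y\<bar>" by (intro mult_left_mono) auto
    also have "\<bar>y\<bar> * \<bar>y\<bar> = y^2" by (simp add: power2_eq_square abs_mult_self_eq)
    finally show ?thesis by simp
  qed
  then have "\<bar>y\<bar> * exp (- t) \<le> (1 + y^2) * exp (- t)" by (rule mult_right_mono) simp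
  then have h2: "\<bar>y\<bar> * exp (- t) \<le> exp (- t) + y^2 * exp (- t)" by (simp add: algebra_simps)
  have h3: "exp (- t) \<le> 1" using t by simp
  have "\<bar>y\<bar> * exp (- t) \<le> 1 + 2 * D" using h1 h2 h3 by linarith
  then show ?thesis unfolding t_def minus_divide_left .
qed

lemma prof_Lam_explicit: "\<Lambda> y = - ((d2 - d1) * deriv U 0 / (2 * \<alpha> * (d1 + d2))) * (y * exp (- (y^2) / (2 * (d1 + d2))))"
  using al d1 d2 unfolding prof_Lam prof_U2 by (simp add: field_simps)

lemma prof_Lam_bound: "\<exists>M. \<forall>y. \<bar>\<Lambda> y\<bar> \<le> M"
proof -
  define c where "c = \<bar>(d2 - d1) * deriv U 0 / (2 * \<alpha> * (d1 + d2))\<bar>"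
  have "\<bar>\<Lambda> y\<bar> \<le> c * (1 + 2 * (d1 + d2))" for y
  proof -
    have "\<bar>\<Lambda> y\<bar> = c * (\<bar>y\<bar> * exp (- (y^2) / (2 * (d1 + d2))))"
      unfolding prof_Lam_explicit c_def by (simp add: abs_mult)
    also have "\<dots> \<le> c * (1 + 2 * (d1 + d2))"
      by (rule mult_left_mono[OF texp_bound]) (use d1 d2 in \<open>auto simp: c_def\<close>)
    finally show ?thesis .
  qed
  then show ?thesis by blast
qed

lemma prof_U1_bound: "\<bar>deriv U y\<bar> \<le> \<bar>deriv U 0\<bar>"
proof -
  have "0 \<le> y^2 / (2 * (d1 + d2))" using d1 d2 by simp
  then have "exp (- (y^2) / (2 * (d1 + d2))) \<le> 1" by simp
  then show ?thesis unfolding prof_U1[of y] by (simp add: abs_mult mult_left_le)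
qed

lemma prof_Lam_sq: "\<Lambda> y ^ 2 = ((d2 - d1) * deriv U 0 / (2 * \<alpha> * (d1 + d2)))^2 * sqrt (pi * (d1 + d2))
     * (normal_density 0 (sqrt ((d1 + d2)/2)) y * (y - 0)^2)"
proof -
  define D where "D = d1 + d2"
  have D: "0 < D" using d1 d2 by (simp add: D_def)
  have nd: "normal_density 0 (sqrt (D/2)) y = 1 / sqrt (pi * D) * exp (- (y^2) / D)"
    using D by (simp add: normal_density_def power2_eq_square real_sqrt_mult)
  have e: "(exp (- (y^2) / (2 * D)))^2 = exp (- (y^2) / D)"
    by (simp add: power2_eq_square exp_add[symmetric])
  have "sqrt (pi * D) > 0" using D by simp
  have L: "\<Lambda> y = - ((d2 - d1) * deriv U 0 / (2 * \<alpha> * D)) * (y * exp (- (y^2) / (2 * D)))"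
    using prof_Lam_explicit D_def by simp
  have "\<Lambda> y ^ 2 = ((d2 - d1) * deriv U 0 / (2 * \<alpha> * D))^2 * y^2 * (exp (- (y^2) / (2 * D)))^2"
    unfolding L by (simp only: power_mult_distrib power2_minus mult.assoc)
  also have "\<dots> = ((d2 - d1) * deriv U 0 / (2 * \<alpha> * D))^2 * y^2 * exp (- (y^2) / D)"
    unfolding e ..
  also have "\<dots> = ((d2 - d1) * deriv U 0 / (2 * \<alpha> * D))^2 * sqrt (pi * D) * (normal_density 0 (sqrt (D/2)) y * (y - 0)^2)"
    unfolding nd using \<open>sqrt (pi * D) > 0\<close> by (simp add: field_simps)
  finally show ?thesis unfolding D_def .
qed

lemma prof_int1:
  assumes "0 < k"
  shows "integrable lborel (\<lambda>y. \<Lambda> y ^ 2 / (4 * k * U y powr \<alpha>))"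
proof -
  obtain c :: real where cC: "0 < c" "\<And>y. c \<le> U y" using prof_bounds by blast
  define K where "K = ((d2 - d1) * deriv U 0 / (2 * \<alpha> * (d1 + d2)))^2 * sqrt (pi * (d1 + d2))"
  have K: "0 \<le> K" unfolding K_def using d1 d2 by simp
  show ?thesis
  proof (rule Bochner_Integration.integrable_bound[where f="\<lambda>y. K / (4 * k * c powr \<alpha>) * (normal_density 0 (sqrt ((d1 + d2)/2)) y * (y - 0)^2)"])
    show "integrable lborel (\<lambda>y. K / (4 * k * c powr \<alpha>) * (normal_density 0 (sqrt ((d1 + d2)/2)) y * (y - 0)^2))"
      using d1 d2 by (intro integrable_mult_right integrable_normal_moment) auto
    have "continuous_on UNIV (\<lambda>y. \<Lambda> y ^ 2 / (4 * k * U y powr \<alpha>))"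
    proof -
      have "\<Lambda> = (\<lambda>y. (d2 - d1) * deriv (deriv U) y / (2 * \<alpha>))" using prof_Lam by auto
      moreover have "\<forall>y. U y \<noteq> 0" using prof_Upos(1) by (metis less_irrefl)
      moreover have "\<alpha> \<noteq> 0" using al by simp
      ultimately show ?thesis using prof_cont2 prof_contU assms
        by (auto intro!: continuous_intros)
    qed
    then show "(\<lambda>y. \<Lambda> y ^ 2 / (4 * k * U y powr \<alpha>)) \<in> borel_measurable lborel"
      by (simp add: borel_measurable_continuous_onI)
    show "AE y in lborel. norm (\<Lambda> y ^ 2 / (4 * k * U y powr \<alpha>))
        \<le> norm (K / (4 * k * c powr \<alpha>) * (normal_density 0 (sqrt ((d1 + d2)/2)) y * (y - 0)^2))"
    proof (rule AE_I2)
      fix y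
      have cp: "c powr \<alpha> \<le> U y powr \<alpha>" using cC al by (intro powr_mono2) auto
      have cp0: "0 < c powr \<alpha>" using cC by simp
      have "\<Lambda> y ^ 2 / (4 * k * U y powr \<alpha>) \<le> \<Lambda> y ^ 2 / (4 * k * c powr \<alpha>)"
        using cp cp0 assms prof_Upos(1)[of y] by (intro divide_left_mono) (auto intro!: mult_pos_pos)
      also have "\<dots> = K / (4 * k * c powr \<alpha>) * (normal_density 0 (sqrt ((d1 + d2)/2)) y * (y - 0)^2)"
        unfolding prof_Lam_sq K_def by simp
      finally show "norm (\<Lambda> y ^ 2 / (4 * k * U y powr \<alpha>))
        \<le> norm (K / (4 * k * c powr \<alpha>) * (normal_density 0 (sqrt ((d1 + d2)/2)) y * (y - 0)^2))"
        using assms prof_Upos[of y] K cp0 by simp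
    qed
  qed
qed

end




lemma Fp_chain [derivative_intros]:
  assumes "p \<noteq> 0" "(f has_real_derivative f') (at x)" "0 < f x"
  shows "((\<lambda>x. Fp p (f x)) has_real_derivative F1 p (f x) * f') (at x)"
  using DERIV_chain2[OF Fp_deriv[OF assms(1,3)] assms(2)] by simp

lemma F1_chain [derivative_intros]:
  assumes "(f has_real_derivative f') (at x)" "0 < f x"
  shows "((\<lambda>x. F1 p (f x)) has_real_derivative F2 p (f x) * f') (at x)"
  using DERIV_chain2[OF F1_deriv[OF assms(2)] assms(1)] by simp

definition phiF :: "real \<Rightarrow> real \<Rightarrow> real" where
  "phiF p z = (if z = 1 then 0 else Fp p z / (z - 1))"

lemma phi_cont: "p \<noteq> 0 \<Longrightarrow> isCont (phiF p) 1"
proof -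
  assume p: "p \<noteq> 0"
  have "((\<lambda>y. (Fp p y - Fp p 1) / (y - 1)) \<longlongrightarrow> F1 p 1) (at 1)"
    using Fp_deriv[OF p, of 1] by (simp add: has_field_derivative_iff)
  then have "((\<lambda>y. Fp p y / (y - 1)) \<longlongrightarrow> 0) (at 1)" by simp
  then have "(phiF p \<longlongrightarrow> 0) (at 1)"
    by (rule Lim_transform_eventually) (auto simp: phiF_def eventually_at_filter)
  then show ?thesis by (simp add: isCont_def phiF_def)
qed

lemma Fp_phi: "Fp p z = (z - 1) * phiF p z"
  by (simp add: phiF_def)

lemma Fp_cont: "p \<noteq> 0 \<Longrightarrow> isCont (Fp p) 1"
  using Fp_deriv[of p 1] by (simp add: DERIV_isCont)

lemma F1_cont: "isCont (F1 p) 1"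
  using F1_deriv[of 1 p] by (simp add: DERIV_isCont)

lemma bounded_mult_zero:
  fixes g f :: "real \<Rightarrow> real"
  assumes "(f \<longlongrightarrow> 0) F" "\<And>x. \<bar>g x\<bar> \<le> M"
  shows "((\<lambda>x. g x * f x) \<longlongrightarrow> 0) F"
proof (rule tendsto_0_le[OF assms(1), where K=M])
  show "\<forall>\<^sub>F x in F. norm (g x * f x) \<le> norm (f x) * M"
  proof (rule always_eventually, rule allI)
    fix x
    have "\<bar>g x\<bar> * \<bar>f x\<bar> \<le> M * \<bar>f x\<bar>" by (rule mult_right_mono[OF assms(2)]) simp
    then show "norm (g x * f x) \<le> norm (f x) * M" by (simp add: abs_mult mult.commute)
  qed
qed

lemma G_lim:
  fixes r r1 q q1 U U1 :: "real \<Rightarrow> real"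
  assumes p: "p \<noteq> 0"
    and r: "(r \<longlongrightarrow> 1) F" "(r1 \<longlongrightarrow> 0) F" "((\<lambda>y. y * (r y - 1)) \<longlongrightarrow> 0) F"
    and q: "(q \<longlongrightarrow> 1) F" "(q1 \<longlongrightarrow> 0) F" "((\<lambda>y. y * (q y - 1)) \<longlongrightarrow> 0) F"
    and U: "\<And>y. \<bar>U y\<bar> \<le> M" "\<And>y. \<bar>U1 y\<bar> \<le> M"
  shows "((\<lambda>y. d1 * (U y * F1 p (r y) * r1 y + U1 y * Fp p (r y)) + y / 2 * U y * Fp p (r y)
              + d2 * (U y * F1 p (q y) * q1 y + U1 y * Fp p (q y)) + y / 2 * U y * Fp p (q y)) \<longlongrightarrow> 0) F"
proof -
  have one: "((\<lambda>y. d * (U y * F1 p (s y) * s1 y + U1 y * Fp p (s y)) + y / 2 * U y * Fp p (s y)) \<longlongrightarrow> 0) F"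
    if s: "(s \<longlongrightarrow> 1) F" "(s1 \<longlongrightarrow> 0) F" "((\<lambda>y. y * (s y - 1)) \<longlongrightarrow> 0) F" for s s1 :: "real \<Rightarrow> real" and d
  proof -
    have a: "((\<lambda>y. F1 p (s y)) \<longlongrightarrow> 0) F" using isCont_tendsto_compose[OF F1_cont s(1)] by simp
    have b: "((\<lambda>y. Fp p (s y)) \<longlongrightarrow> 0) F" using isCont_tendsto_compose[OF Fp_cont[OF p] s(1)] by simp
    have c: "((\<lambda>y. phiF p (s y)) \<longlongrightarrow> 0) F" using isCont_tendsto_compose[OF phi_cont[OF p] s(1)] by (simp add: phiF_def)
    have t1: "((\<lambda>y. U y * (F1 p (s y) * s1 y)) \<longlongrightarrow> 0) F"
      using tendsto_mult[OF a s(2)] by (intro bounded_mult_zero[OF _ U(1)]) simp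
    have t2: "((\<lambda>y. U1 y * Fp p (s y)) \<longlongrightarrow> 0) F"
      by (rule bounded_mult_zero[OF b U(2)])
    have t3: "((\<lambda>y. U y * (1/2 * ((y * (s y - 1)) * phiF p (s y)))) \<longlongrightarrow> 0) F"
      using tendsto_mult[OF s(3) c] by (intro bounded_mult_zero[OF _ U(1)] tendsto_mult_right_zero) simp
    have "((\<lambda>y. d * (U y * (F1 p (s y) * s1 y) + U1 y * Fp p (s y)) + U y * (1/2 * ((y * (s y - 1)) * phiF p (s y)))) \<longlongrightarrow> d * (0 + 0) + 0) F"
      by (intro tendsto_intros t1 t2 t3)
    moreover have "d * (U y * (F1 p (s y) * s1 y) + U1 y * Fp p (s y)) + U y * (1/2 * ((y * (s y - 1)) * phiF p (s y)))
        = d * (U y * F1 p (s y) * s1 y + U1 y * Fp p (s y)) + y / 2 * U y * Fp p (s y)" for y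
      by (simp add: Fp_phi[of p "s y"] algebra_simps)
    ultimately show ?thesis by simp
  qed
  have "((\<lambda>y. (d1 * (U y * F1 p (r y) * r1 y + U1 y * Fp p (r y)) + y / 2 * U y * Fp p (r y))
           + (d2 * (U y * F1 p (q y) * q1 y + U1 y * Fp p (q y)) + y / 2 * U y * Fp p (q y))) \<longlongrightarrow> 0 + 0) F"
    by (intro tendsto_add one r q)
  then show ?thesis by (simp add: add.assoc)
qed




lemma ibp_bound:
  fixes I B G G' :: "real \<Rightarrow> real"
  assumes intI: "integrable lborel I" and intB: "integrable lborel B"
    and der: "\<And>y. (G has_real_derivative G' y) (at y)"
    and le: "\<And>y. I y \<le> B y + G' y"
    and top: "(G \<longlongrightarrow> 0) at_top" and bot: "(G \<longlongrightarrow> 0) at_bot"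
  shows "(LINT y|lborel. I y) \<le> (LINT y|lborel. B y)"
proof -
  define f where "f y = I y - B y" for y
  have intf: "integrable lborel f" unfolding f_def using intI intB by auto
  have lim: "((\<lambda>R. LINT y|lborel. indicator {-R..R} y *\<^sub>R f y) \<longlongrightarrow> (LINT y|lborel. f y)) at_top"
  proof (rule integral_dominated_convergence_at_top[where w="\<lambda>y. norm (f y)"])
    show "f \<in> borel_measurable lborel" using intf by auto
    show "\<And>t. (\<lambda>y. indicator {- t..t} y *\<^sub>R f y) \<in> borel_measurable lborel" using intf by auto
    show "integrable lborel (\<lambda>y. norm (f y))" using intf by auto
    show "AE x in lborel. ((\<lambda>i. indicator {- i..i} x *\<^sub>R f x) \<longlongrightarrow> f x) at_top"
    proof (rule AE_I2)
      fix x
      have "eventually (\<lambda>i. indicator {- i..i} x *\<^sub>R f x = f x) at_top"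
        using eventually_ge_at_top[of "\<bar>x\<bar>"] by eventually_elim (auto simp: indicator_def)
      then show "((\<lambda>i. indicator {- i..i} x *\<^sub>R f x) \<longlongrightarrow> f x) at_top"
        by (rule tendsto_eventually)
    qed
    show "\<forall>\<^sub>F i in at_top. AE x in lborel. norm (indicator {- i..i} x *\<^sub>R f x) \<le> norm (f x)"
      by (auto simp: indicator_def)
  qed
  have bnd: "eventually (\<lambda>R. (LINT y|lborel. indicator {-R..R} y *\<^sub>R f y) \<le> G R - G (-R)) at_top"
    using eventually_ge_at_top[of 0]
  proof eventually_elim
    case (elim R)
    have si: "set_integrable lborel {-R..R} f"
      unfolding set_integrable_def by (rule integrable_mult_indicator) (use intf in auto)
    have eq: "(LINT y|lborel. indicator {-R..R} y *\<^sub>R f y) = integral {-R..R} f"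
      using set_borel_integral_eq_integral(2)[OF si] by (simp add: set_lebesgue_integral_def)
    have hf: "(f has_integral integral {-R..R} f) {-R..R}"
      using set_borel_integral_eq_integral(1)[OF si] by (simp add: has_integral_integral)
    have hG: "(G' has_integral (G R - G (-R))) {-R..R}"
    proof (rule fundamental_theorem_of_calculus)
      show "- R \<le> R" using elim by simp
      fix x :: real
      have "(G has_real_derivative G' x) (at x within {-R..R})"
        using der[of x] by (rule has_field_derivative_at_within)
      then show "(G has_vector_derivative G' x) (at x within {- R..R})"
        by (simp add: has_real_derivative_iff_has_vector_derivative)
    qed
    have "integral {-R..R} f \<le> G R - G (-R)"
      by (rule has_integral_le[OF hf hG]) (use le in \<open>auto simp: f_def algebra_simps\<close>)
    then show ?case using eq by simp
  qed
  have lim2: "((\<lambda>R. G R - G (-R)) \<longlongrightarrow> 0) at_top"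
  proof -
    have m: "((\<lambda>R. G (-R)) \<longlongrightarrow> 0) at_top"
      by (rule filterlim_compose[OF bot]) (rule filterlim_uminus_at_bot_at_top)
    show ?thesis using tendsto_diff[OF top m] by simp
  qed
  have "(LINT y|lborel. f y) \<le> 0"
    by (rule tendsto_le[OF _ lim2 lim bnd]) simp
  then show ?thesis using intI intB unfolding f_def by simp
qed


lemma rel_density_derivs:
  fixes f f1 U U1 U2 :: "real \<Rightarrow> real"
  assumes fd: "\<And>z. (f has_real_derivative f1 z) (at z)"
    and f1d: "\<And>z. f1 differentiable (at z)"
    and Ud: "\<And>z. (U has_real_derivative U1 z) (at z)"
    and U1d: "\<And>z. (U1 has_real_derivative U2 z) (at z)"
    and Up: "\<And>z. 0 < U z"
  shows "((\<lambda>z. f z / U z) has_real_derivative deriv (\<lambda>z. f z / U z) y) (at y)"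
    "(deriv (\<lambda>z. f z / U z) has_real_derivative deriv (deriv (\<lambda>z. f z / U z)) y) (at y)"
    "f1 y = U1 y * (f y / U y) + U y * deriv (\<lambda>z. f z / U z) y"
    "deriv f1 y = U2 y * (f y / U y) + 2 * U1 y * deriv (\<lambda>z. f z / U z) y + U y * deriv (deriv (\<lambda>z. f z / U z)) y"
proof -
  define r where "r = (\<lambda>z. f z / U z)"
  have U0: "U z \<noteq> 0" for z using Up[of z] by simp
  have rd: "(r has_real_derivative (f1 z * U z - f z * U1 z) / (U z * U z)) (at z)" for z
    unfolding r_def by (rule DERIV_divide[OF fd Ud U0])
  then have dr: "deriv r = (\<lambda>z. (f1 z * U z - f z * U1 z) / (U z * U z))"
    by (intro ext DERIV_imp_deriv)
  show "(r has_real_derivative deriv r y) (at y)" using rd dr by simp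
  have f1d': "(f1 has_real_derivative deriv f1 z) (at z)" for z
    using f1d by (simp add: DERIV_deriv_iff_real_differentiable)
  have "\<exists>D. ((\<lambda>z. (f1 z * U z - f z * U1 z) / (U z * U z)) has_real_derivative D) (at z)" for z
    using DERIV_divide[OF DERIV_diff[OF DERIV_mult'[OF f1d' Ud] DERIV_mult'[OF fd U1d]] DERIV_mult'[OF Ud Ud], of z] U0[of z] by auto
  then have "(deriv r has_real_derivative deriv (deriv r) z) (at z)" for z
    unfolding dr by (meson DERIV_deriv_iff_real_differentiable real_differentiable_def)
  then show "(deriv r has_real_derivative deriv (deriv r) y) (at y)" .
  have f1e: "f1 z = U1 z * r z + U z * deriv r z" for z
  proof -
    have "deriv r z = (f1 z * U z - f z * U1 z) / (U z * U z)" using dr by simp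
    then show ?thesis unfolding r_def using U0[of z] by (simp add: field_simps)
  qed
  then show "f1 y = U1 y * (f y / U y) + U y * deriv r y" by (simp add: r_def)
  have f1eq: "f1 = (\<lambda>z. U1 z * r z + U z * deriv r z)" using f1e by auto
  have "((\<lambda>z. U1 z * r z + U z * deriv r z) has_real_derivative
       (U1 y * deriv r y + U2 y * r y) + (U y * deriv (deriv r) y + U1 y * deriv r y)) (at y)"
    by (intro DERIV_add DERIV_mult' U1d Ud \<open>\<And>z. (deriv r has_real_derivative deriv (deriv r) z) (at z)\<close>
        \<open>(r has_real_derivative deriv r y) (at y)\<close>)
  then have "deriv f1 y = (U1 y * deriv r y + U2 y * r y) + (U y * deriv (deriv r) y + U1 y * deriv r y)"
    unfolding f1eq by (rule DERIV_imp_deriv)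
  then show "deriv f1 y = U2 y * (f y / U y) + 2 * U1 y * deriv r y + U y * deriv (deriv r) y"
    by (simp add: r_def algebra_simps)
qed

lemma key_identity:
  fixes d1 d2 y U U1 U2 r r1 r2 q q1 q2 Fr F1r F2r Fq F1q F2q L S :: real
  assumes eU: "d1*U2 + y/2*U1 + L = 0" and eV: "d2*U2 + y/2*U1 - L = 0"
  shows "F1r*(d1*(U2*r + 2*U1*r1 + U*r2) + y/2*(U1*r + U*r1) + S)
       + F1q*(d2*(U2*q + 2*U1*q1 + U*q2) + y/2*(U1*q + U*q1) - S)
   = (-(1/2)*(U*Fr + U*Fq) + (L*((q*F1q - Fq) - (r*F1r - Fr)) + S*(F1r - F1q)))
     - (d1*U*F2r*r1^2 + d2*U*F2q*q1^2)
     + ((d1*(((U1*F1r + U*(F2r*r1))*r1 + U*F1r*r2) + (U2*Fr + U1*(F1r*r1))) + ((1/2*U + y/2*U1)*Fr + y/2*U*(F1r*r1)))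
       + (d2*(((U1*F1q + U*(F2q*q1))*q1 + U*F1q*q2) + (U2*Fq + U1*(F1q*q1))) + ((1/2*U + y/2*U1)*Fq + y/2*U*(F1q*q1))))"
proof -
  have L1: "L = d2*U2 + y/2*U1" using eV by linarith
  have L2: "L = -(d1*U2 + y/2*U1)" using eU by linarith
  have "L*((q*F1q - Fq) - (r*F1r - Fr)) = L*(q*F1q - Fq) - L*(r*F1r - Fr)" by (simp add: algebra_simps)
  also have "\<dots> = (d2*U2 + y/2*U1)*(q*F1q - Fq) + (d1*U2 + y/2*U1)*(r*F1r - Fr)"
    by (subst L1, subst L2) (simp add: algebra_simps)
  finally have e: "L*((q*F1q - Fq) - (r*F1r - Fr)) = (d2*U2 + y/2*U1)*(q*F1q - Fq) + (d1*U2 + y/2*U1)*(r*F1r - Fr)" .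
  show ?thesis unfolding e by (simp add: algebra_simps power2_eq_square diff_divide_distrib)
qed


lemma G_piece_deriv:
  fixes s s1 s2 U U1 U2 :: "real \<Rightarrow> real"
  assumes p: "p \<noteq> 0"
    and sd: "\<And>z. (s has_real_derivative s1 z) (at z)"
    and s1d: "\<And>z. (s1 has_real_derivative s2 z) (at z)"
    and sp: "\<And>z. 0 < s z"
    and Ud: "\<And>z. (U has_real_derivative U1 z) (at z)"
    and U1d: "\<And>z. (U1 has_real_derivative U2 z) (at z)"
  shows "((\<lambda>y. d * (U y * F1 p (s y) * s1 y + U1 y * Fp p (s y)) + y / 2 * U y * Fp p (s y)) has_real_derivative
    (d * (((U1 x * F1 p (s x) + U x * (F2 p (s x) * s1 x)) * s1 x + U x * F1 p (s x) * s2 x) + (U2 x * Fp p (s x) + U1 x * (F1 p (s x) * s1 x)))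
     + ((1/2 * U x + x/2 * U1 x) * Fp p (s x) + x/2 * U x * (F1 p (s x) * s1 x)))) (at x)"
proof -
  have A1: "((\<lambda>y. U y * F1 p (s y)) has_real_derivative U x * (F2 p (s x) * s1 x) + U1 x * F1 p (s x)) (at x)"
    by (rule DERIV_mult'[OF Ud F1_chain[OF sd sp]])
  have A2: "((\<lambda>y. U y * F1 p (s y) * s1 y) has_real_derivative
      U x * F1 p (s x) * s2 x + (U x * (F2 p (s x) * s1 x) + U1 x * F1 p (s x)) * s1 x) (at x)"
    by (rule DERIV_mult'[OF A1 s1d])
  have A3: "((\<lambda>y. U1 y * Fp p (s y)) has_real_derivative U1 x * (F1 p (s x) * s1 x) + U2 x * Fp p (s x)) (at x)"
    by (rule DERIV_mult'[OF U1d Fp_chain[OF p sd sp]])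
  have A4: "((\<lambda>y. d * (U y * F1 p (s y) * s1 y + U1 y * Fp p (s y))) has_real_derivative
      d * ((U x * F1 p (s x) * s2 x + (U x * (F2 p (s x) * s1 x) + U1 x * F1 p (s x)) * s1 x) + (U1 x * (F1 p (s x) * s1 x) + U2 x * Fp p (s x)))) (at x)"
    by (rule DERIV_cmult[OF DERIV_add[OF A2 A3]])
  have A5a: "((\<lambda>y. y / 2 * U y) has_real_derivative x / 2 * U1 x + 1 / 2 * U x) (at x)"
    by (rule DERIV_mult'[OF DERIV_cdivide[OF DERIV_ident] Ud])
  have A5: "((\<lambda>y. y / 2 * U y * Fp p (s y)) has_real_derivative
      x / 2 * U x * (F1 p (s x) * s1 x) + (x / 2 * U1 x + 1 / 2 * U x) * Fp p (s x)) (at x)"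
    by (rule DERIV_mult'[OF A5a Fp_chain[OF p sd sp]])
  show ?thesis
    by (rule DERIV_cong[OF DERIV_add[OF A4 A5]]) (simp add: algebra_simps)
qed



lemma abs_to_lin:
  fixes g :: "real \<Rightarrow> real"
  assumes "((\<lambda>y. \<bar>y\<bar> * g y) \<longlongrightarrow> 0) F"
  shows "((\<lambda>y. y * g y) \<longlongrightarrow> 0) F"
proof -
  have "((\<lambda>y. \<bar>\<bar>y\<bar> * g y\<bar>) \<longlongrightarrow> 0) F" using assms by (simp only: tendsto_rabs_zero_iff)
  then have "((\<lambda>y. \<bar>y * g y\<bar>) \<longlongrightarrow> 0) F" by (simp add: abs_mult)
  then show ?thesis by (simp only: tendsto_rabs_zero_iff)
qed

lemma rapid_facts:
  assumes "rapid_decay f"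
  shows "(f \<longlongrightarrow> 0) at_top" "(f \<longlongrightarrow> 0) at_bot"
    "((\<lambda>y. y * f y) \<longlongrightarrow> 0) at_top" "((\<lambda>y. y * f y) \<longlongrightarrow> 0) at_bot"
proof -
  have a: "((\<lambda>y. \<bar>y\<bar> ^ n * f y) \<longlongrightarrow> 0) at_top" "((\<lambda>y. \<bar>y\<bar> ^ n * f y) \<longlongrightarrow> 0) at_bot" for n
    using assms unfolding rapid_decay_def by auto
  show "(f \<longlongrightarrow> 0) at_top" "(f \<longlongrightarrow> 0) at_bot" using a[of 0] by simp_all
  show "((\<lambda>y. y * f y) \<longlongrightarrow> 0) at_top" "((\<lambda>y. y * f y) \<longlongrightarrow> 0) at_bot"
    using a[of 1] by (simp_all add: abs_to_lin)
qed

lemma main_estimate: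
  fixes d1 d2 k \<alpha> Am Ap p t :: real and U V \<Lambda> Bnd :: "real \<Rightarrow> real" and u v :: "real \<Rightarrow> real \<Rightarrow> real"
  assumes d1: "0 < d1" and d2: "0 < d2" and al: "1 \<le> \<alpha>" and k: "0 < k"
    and prof: "similarity_profile d1 d2 \<alpha> \<alpha> Am Ap U V \<Lambda>"
    and sol: "scaled_solution d1 d2 k \<alpha> \<alpha> Am Ap U V p u v"
    and p: "p \<noteq> 0" and t: "0 < t"
    and Bint: "integrable lborel Bnd"
    and Rb: "\<And>y. \<alpha> * \<Lambda> y * (((v t y / U y) powr p - (u t y / U y) powr p) / p)
         + exp t * \<alpha> * k * (v t y powr \<alpha> - u t y powr \<alpha>) * (F1 p (u t y / U y) - F1 p (v t y / U y)) \<le> Bnd y"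
  shows "deriv (\<lambda>s. rel_entropy p U V (u s) (v s)) t \<le> -(1/2) * rel_entropy p U V (u t) (v t) + (LINT y|lborel. Bnd y)"
proof -
  have VU: "V = U" by (rule prof_VU[OF d1 d2 al prof])
  have Upos: "\<And>y. 0 < U y" by (rule prof_Upos(1)[OF d1 d2 al prof])
  have Ud: "\<And>y. (U has_real_derivative deriv U y) (at y)" by (rule prof_d1[OF d1 d2 al prof])
  have U1d: "\<And>y. (deriv U has_real_derivative deriv (deriv U) y) (at y)" by (rule prof_d2[OF d1 d2 al prof])
  have eU: "\<And>y. d1 * deriv (deriv U) y + y / 2 * deriv U y + \<alpha> * \<Lambda> y = 0" by (rule prof_eqU[OF d1 d2 al prof])
  have eV: "\<And>y. d2 * deriv (deriv U) y + y / 2 * deriv U y - \<alpha> * \<Lambda> y = 0" by (rule prof_eqV[OF d1 d2 al prof])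
  have cu: "classical u" and cv: "classical v" using sol unfolding scaled_solution_def by blast+
  have pos: "\<And>y. 0 < u t y \<and> 0 < v t y" using sol t unfolding scaled_solution_def by auto
  have pde: "\<And>y. dtau u t y = d1 * dyy u t y + y / 2 * dy u t y
                     + exp t * \<alpha> * k * (v t y powr \<alpha> - u t y powr \<alpha>) \<and>
        dtau v t y = d2 * dyy v t y + y / 2 * dy v t y
                     - exp t * \<alpha> * k * (v t y powr \<alpha> - u t y powr \<alpha>)"
    using sol t unfolding scaled_solution_def by blast
  have intd: "integrable lborel (Defs.entropy_density p U V (u t) (v t))"
    using sol t unfolding scaled_solution_def by auto
  have dd: "integrable lborel (\<lambda>y. deriv (\<lambda>s. Defs.entropy_density p U V (u s) (v s) y) t) \<and>
            ((\<lambda>s. rel_entropy p U V (u s) (v s)) has_real_derivative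
               (LINT y|lborel. deriv (\<lambda>s. Defs.entropy_density p U V (u s) (v s) y) t)) (at t)"
    using sol t unfolding scaled_solution_def by blast
  have rap: "rapid_decay (\<lambda>y. u t y / U y - 1)" "rapid_decay (\<lambda>y. v t y / V y - 1)"
        "rapid_decay (dy (\<lambda>s z. u s z / U z) t)" "rapid_decay (dy (\<lambda>s z. v s z / V z) t)"
    using sol t unfolding scaled_solution_def by blast+
  define I where "I y = deriv (\<lambda>s. Defs.entropy_density p U V (u s) (v s) y) t" for y
  have dE: "deriv (\<lambda>s. rel_entropy p U V (u s) (v s)) t = (LINT y|lborel. I y)"
    using dd unfolding I_def by (intro DERIV_imp_deriv) blast
  have Iint: "integrable lborel I" using dd unfolding I_def by blast
  define r where "r = (\<lambda>z. u t z / U z)"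
  define q where "q = (\<lambda>z. v t z / U z)"
  have rpos: "\<And>z. 0 < r z" and qpos: "\<And>z. 0 < q z" unfolding r_def q_def using pos Upos by auto
  have cu': "\<And>z. (\<lambda>z. u t z) differentiable (at z)" "\<And>z. (\<lambda>z. dy u t z) differentiable (at z)"
    "\<And>y. (\<lambda>s. u s y) differentiable (at t)"
    using cu t unfolding classical_def by blast+
  have cv': "\<And>z. (\<lambda>z. v t z) differentiable (at z)" "\<And>z. (\<lambda>z. dy v t z) differentiable (at z)"
    "\<And>y. (\<lambda>s. v s y) differentiable (at t)"
    using cv t unfolding classical_def by blast+
  have fdu: "\<And>z. ((\<lambda>z. u t z) has_real_derivative dy u t z) (at z)"
    using cu'(1) by (simp add: dy_def DERIV_deriv_iff_real_differentiable)
  have fdv: "\<And>z. ((\<lambda>z. v t z) has_real_derivative dy v t z) (at z)"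
    using cv'(1) by (simp add: dy_def DERIV_deriv_iff_real_differentiable)
  note RU = rel_density_derivs[OF fdu cu'(2) Ud U1d Upos]
  note RV = rel_density_derivs[OF fdv cv'(2) Ud U1d Upos]
  define r1 where "r1 = deriv r"
  define r2 where "r2 = deriv r1"
  define q1 where "q1 = deriv q"
  define q2 where "q2 = deriv q1"
  have rd: "\<And>y. (r has_real_derivative r1 y) (at y)" and r1d: "\<And>y. (r1 has_real_derivative r2 y) (at y)"
    using RU(1,2) unfolding r_def r1_def r2_def by blast+
  have qd: "\<And>y. (q has_real_derivative q1 y) (at y)" and q1d: "\<And>y. (q1 has_real_derivative q2 y) (at y)"
    using RV(1,2) unfolding q_def q1_def q2_def by blast+
  have dyu: "\<And>y. dy u t y = deriv U y * r y + U y * r1 y" and dyyu: "\<And>y. dyy u t y = deriv (deriv U) y * r y + 2 * deriv U y * r1 y + U y * r2 y"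
    using RU(3,4) unfolding r_def r1_def r2_def dyy_def by blast+
  have dyv: "\<And>y. dy v t y = deriv U y * q y + U y * q1 y" and dyyv: "\<And>y. dyy v t y = deriv (deriv U) y * q y + 2 * deriv U y * q1 y + U y * q2 y"
    using RV(3,4) unfolding q_def q1_def q2_def dyy_def by blast+
  define Pr where "Pr y = d1 * (U y * F1 p (r y) * r1 y + deriv U y * Fp p (r y)) + y / 2 * U y * Fp p (r y)" for y
  define Pq where "Pq y = d2 * (U y * F1 p (q y) * q1 y + deriv U y * Fp p (q y)) + y / 2 * U y * Fp p (q y)" for y
  define G where "G y = Pr y + Pq y" for y
  define G' where "G' x = (d1 * (((deriv U x * F1 p (r x) + U x * (F2 p (r x) * r1 x)) * r1 x + U x * F1 p (r x) * r2 x) + (deriv (deriv U) x * Fp p (r x) + deriv U x * (F1 p (r x) * r1 x)))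
     + ((1/2 * U x + x/2 * deriv U x) * Fp p (r x) + x/2 * U x * (F1 p (r x) * r1 x)))
     + (d2 * (((deriv U x * F1 p (q x) + U x * (F2 p (q x) * q1 x)) * q1 x + U x * F1 p (q x) * q2 x) + (deriv (deriv U) x * Fp p (q x) + deriv U x * (F1 p (q x) * q1 x)))
     + ((1/2 * U x + x/2 * deriv U x) * Fp p (q x) + x/2 * U x * (F1 p (q x) * q1 x)))" for x
  have Gd: "\<And>y. (G has_real_derivative G' y) (at y)"
  proof -
    fix y
    have a: "(Pr has_real_derivative (d1 * (((deriv U y * F1 p (r y) + U y * (F2 p (r y) * r1 y)) * r1 y + U y * F1 p (r y) * r2 y) + (deriv (deriv U) y * Fp p (r y) + deriv U y * (F1 p (r y) * r1 y)))
     + ((1/2 * U y + y/2 * deriv U y) * Fp p (r y) + y/2 * U y * (F1 p (r y) * r1 y)))) (at y)"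
      unfolding Pr_def[abs_def] by (rule G_piece_deriv[OF p rd r1d rpos Ud U1d])
    have b: "(Pq has_real_derivative (d2 * (((deriv U y * F1 p (q y) + U y * (F2 p (q y) * q1 y)) * q1 y + U y * F1 p (q y) * q2 y) + (deriv (deriv U) y * Fp p (q y) + deriv U y * (F1 p (q y) * q1 y)))
     + ((1/2 * U y + y/2 * deriv U y) * Fp p (q y) + y/2 * U y * (F1 p (q y) * q1 y)))) (at y)"
      unfolding Pq_def[abs_def] by (rule G_piece_deriv[OF p qd q1d qpos Ud U1d])
    show "(G has_real_derivative G' y) (at y)"
      unfolding G_def[abs_def] G'_def using DERIV_add[OF a b] by simp
  qed
  define dens where "dens y = Defs.entropy_density p U V (u t) (v t) y" for y
  have dens_eq: "dens y = U y * Fp p (r y) + U y * Fp p (q y)" for y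
    unfolding dens_def Defs.entropy_density_def r_def q_def VU ..
  have Ieq: "I y = F1 p (r y) * dtau u t y + F1 p (q y) * dtau v t y" for y
  proof -
    have ud: "((\<lambda>s. u s y) has_real_derivative dtau u t y) (at t)"
      using cu'(3)[of y] by (simp add: dtau_def DERIV_deriv_iff_real_differentiable)
    have vd: "((\<lambda>s. v s y) has_real_derivative dtau v t y) (at t)"
      using cv'(3)[of y] by (simp add: dtau_def DERIV_deriv_iff_real_differentiable)
    have a: "((\<lambda>s. Fp p (u s y / U y)) has_real_derivative F1 p (u t y / U y) * (dtau u t y / U y)) (at t)"
      by (rule Fp_chain[OF p DERIV_cdivide[OF ud]]) (use rpos in \<open>simp add: r_def\<close>)
    have b: "((\<lambda>s. Fp p (v s y / U y)) has_real_derivative F1 p (v t y / U y) * (dtau v t y / U y)) (at t)"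
      by (rule Fp_chain[OF p DERIV_cdivide[OF vd]]) (use qpos in \<open>simp add: q_def\<close>)
    have "((\<lambda>s. Defs.entropy_density p U V (u s) (v s) y) has_real_derivative
        U y * (F1 p (u t y / U y) * (dtau u t y / U y)) + U y * (F1 p (v t y / U y) * (dtau v t y / U y))) (at t)"
      unfolding Defs.entropy_density_def VU by (rule DERIV_add[OF DERIV_cmult[OF a] DERIV_cmult[OF b]])
    then have "I y = U y * (F1 p (u t y / U y) * (dtau u t y / U y)) + U y * (F1 p (v t y / U y) * (dtau v t y / U y))"
      unfolding I_def by (rule DERIV_imp_deriv)
    then show ?thesis using Upos[of y] by (simp add: r_def q_def field_simps)
  qed
  have Ible: "I y \<le> (-(1/2) * dens y + Bnd y) + G' y" for y
  proof -
    define S where "S = exp t * \<alpha> * k * (v t y powr \<alpha> - u t y powr \<alpha>)"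
    have I1: "I y = F1 p (r y) * (d1 * (deriv (deriv U) y * r y + 2 * deriv U y * r1 y + U y * r2 y) + y/2 * (deriv U y * r y + U y * r1 y) + S)
       + F1 p (q y) * (d2 * (deriv (deriv U) y * q y + 2 * deriv U y * q1 y + U y * q2 y) + y/2 * (deriv U y * q y + U y * q1 y) - S)"
      unfolding Ieq using pde[of y] unfolding S_def dyu dyyu dyv dyyv by simp
    have KI: "I y = (-(1/2) * (U y * Fp p (r y) + U y * Fp p (q y)) + (\<alpha> * \<Lambda> y * ((q y * F1 p (q y) - Fp p (q y)) - (r y * F1 p (r y) - Fp p (r y))) + S * (F1 p (r y) - F1 p (q y))))
       - (d1 * U y * F2 p (r y) * (r1 y)^2 + d2 * U y * F2 p (q y) * (q1 y)^2) + G' y"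
      unfolding I1 G'_def by (rule key_identity[OF eU eV])
    have Hd: "(q y * F1 p (q y) - Fp p (q y)) - (r y * F1 p (r y) - Fp p (r y)) = (q y powr p - r y powr p) / p"
      using H_eq[OF p qpos[of y]] H_eq[OF p rpos[of y]] by (simp add: diff_divide_distrib)
    have R: "\<alpha> * \<Lambda> y * ((q y * F1 p (q y) - Fp p (q y)) - (r y * F1 p (r y) - Fp p (r y))) + S * (F1 p (r y) - F1 p (q y)) \<le> Bnd y"
      unfolding Hd S_def using Rb[of y] unfolding r_def q_def by simp
    have D: "0 \<le> d1 * U y * F2 p (r y) * (r1 y)^2 + d2 * U y * F2 p (q y) * (q1 y)^2"
      using d1 d2 Upos[of y] F2_nonneg[of p "r y"] F2_nonneg[of p "q y"] by (intro add_nonneg_nonneg mult_nonneg_nonneg) auto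
    show ?thesis using KI R D unfolding dens_eq by linarith
  qed
  have Bint2: "integrable lborel (\<lambda>y. -(1/2) * dens y + Bnd y)"
    using intd Bint unfolding dens_def by auto
  obtain C where C: "\<And>y. U y \<le> C" using prof_bounds[OF d1 d2 al prof] by blast
  define M where "M = max C \<bar>deriv U 0\<bar>"
  have MU: "\<bar>U y\<bar> \<le> M" for y
  proof -
    have "\<bar>U y\<bar> = U y" using Upos[of y] by simp
    also have "\<dots> \<le> C" by (rule C)
    also have "C \<le> M" unfolding M_def by (rule max.cobounded1)
    finally show ?thesis .
  qed
  have MU1: "\<bar>deriv U y\<bar> \<le> M" for y
    unfolding M_def by (rule order_trans[OF prof_U1_bound[OF d1 d2 al prof] max.cobounded2])
  have r1eq: "dy (\<lambda>s z. u s z / U z) t = r1" by (simp add: dy_def r1_def r_def fun_eq_iff)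
  have q1eq: "dy (\<lambda>s z. v s z / V z) t = q1" by (simp add: dy_def q1_def q_def fun_eq_iff VU)
  have rr: "(\<lambda>y. u t y / U y - 1) = (\<lambda>y. r y - 1)" by (simp add: r_def)
  have qq: "(\<lambda>y. v t y / V y - 1) = (\<lambda>y. q y - 1)" by (simp add: q_def VU)
  note rf = rapid_facts[OF rap(1)[unfolded rr]] and qf = rapid_facts[OF rap(2)[unfolded qq]]
  note r1f = rapid_facts[OF rap(3)[unfolded r1eq]] and q1f = rapid_facts[OF rap(4)[unfolded q1eq]]
  have Glim: "(G \<longlongrightarrow> 0) F" if "((\<lambda>y. r y - 1) \<longlongrightarrow> 0) F" "(r1 \<longlongrightarrow> 0) F" "((\<lambda>y. y * (r y - 1)) \<longlongrightarrow> 0) F"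
     "((\<lambda>y. q y - 1) \<longlongrightarrow> 0) F" "(q1 \<longlongrightarrow> 0) F" "((\<lambda>y. y * (q y - 1)) \<longlongrightarrow> 0) F" for F
  proof -
    have "(r \<longlongrightarrow> 1) F" "(q \<longlongrightarrow> 1) F" using that(1,4) by (simp_all add: LIM_zero_iff)
    from G_lim[OF p this(1) that(2,3) this(2) that(5,6) MU MU1, where ?d1.0=d1 and ?d2.0=d2]
    show ?thesis unfolding G_def[abs_def] Pr_def Pq_def by (simp add: add.assoc)
  qed
  have Gtop: "(G \<longlongrightarrow> 0) at_top" by (rule Glim) (use rf qf r1f q1f in auto)
  have Gbot: "(G \<longlongrightarrow> 0) at_bot" by (rule Glim) (use rf qf r1f q1f in auto)
  have "(LINT y|lborel. I y) \<le> (LINT y|lborel. -(1/2) * dens y + Bnd y)"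
    by (rule ibp_bound[OF Iint Bint2 Gd Ible Gtop Gbot])
  also have "\<dots> = -(1/2) * (LINT y|lborel. dens y) + (LINT y|lborel. Bnd y)"
    using intd Bint unfolding dens_def by simp
  also have "(LINT y|lborel. dens y) = rel_entropy p U V (u t) (v t)"
    unfolding dens_def rel_entropy_def Defs.entropy_density_def ..
  finally show ?thesis unfolding dE .
qed




lemma div_exp: "(A::real) / exp t = exp (-t) * A"
  by (simp add: exp_minus divide_inverse mult.commute)

lemma case_i:
  fixes d1 d2 k \<alpha> Am Ap :: real and U V \<Lambda> :: "real \<Rightarrow> real" and u v :: "real \<Rightarrow> real \<Rightarrow> real"
  assumes d1: "0 < d1" and d2: "0 < d2" and k: "0 < k" and al: "2 \<le> \<alpha>"
    and prof: "similarity_profile d1 d2 \<alpha> \<alpha> Am Ap U V \<Lambda>"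
    and sol: "scaled_solution d1 d2 k \<alpha> \<alpha> Am Ap U V (\<alpha> - 1) u v"
    and t: "0 < \<tau>"
  shows "deriv (\<lambda>t. rel_entropy (\<alpha> - 1) U V (u t) (v t)) \<tau>
           \<le> - (1/2) * rel_entropy (\<alpha> - 1) U V (u \<tau>) (v \<tau>)
             + exp (-\<tau>) * (LINT y|lborel. \<Lambda> y ^ 2 / (4 * k * U y powr \<alpha>))"
proof -
  have al1: "1 \<le> \<alpha>" using al by simp
  have Upos: "\<And>y. 0 < U y" by (rule prof_Upos(1)[OF d1 d2 al1 prof])
  have pos: "\<And>y. 0 < u \<tau> y \<and> 0 < v \<tau> y" using sol t unfolding scaled_solution_def by auto
  have int1: "integrable lborel (\<lambda>y. \<Lambda> y ^ 2 / (4 * k * U y powr \<alpha>))"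
    by (rule prof_int1[OF d1 d2 al1 prof k])
  have "deriv (\<lambda>s. rel_entropy (\<alpha> - 1) U V (u s) (v s)) \<tau> \<le> -(1/2) * rel_entropy (\<alpha> - 1) U V (u \<tau>) (v \<tau>)
      + (LINT y|lborel. exp (-\<tau>) * (\<Lambda> y ^ 2 / (4 * k * U y powr \<alpha>)))"
  proof (rule main_estimate[OF d1 d2 al1 k prof sol _ t])
    show "\<alpha> - 1 \<noteq> 0" using al by simp
    show "integrable lborel (\<lambda>y. exp (-\<tau>) * (\<Lambda> y ^ 2 / (4 * k * U y powr \<alpha>)))"
      by (rule integrable_mult_right) (rule int1)
    fix y
    define r where "r = u \<tau> y / U y"
    define z where "z = v \<tau> y / U y"
    have r: "0 < r" and z: "0 < z" using pos[of y] Upos[of y] by (simp_all add: r_def z_def)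
    have ur: "u \<tau> y = U y * r" using Upos[of y] by (simp add: r_def)
    have vz: "v \<tau> y = U y * z" using Upos[of y] by (simp add: z_def)
    have uu: "u \<tau> y powr \<alpha> = U y powr \<alpha> * r powr \<alpha>" unfolding ur by (rule powr_mult)
    have vv: "v \<tau> y powr \<alpha> = U y powr \<alpha> * z powr \<alpha>" unfolding vz by (rule powr_mult)
    have "\<alpha> * \<Lambda> y * ((z powr (\<alpha>-1) - r powr (\<alpha>-1)) / (\<alpha>-1))
     + exp \<tau> * \<alpha> * k * (U y powr \<alpha> * z powr \<alpha> - U y powr \<alpha> * r powr \<alpha>) * (F1 (\<alpha>-1) r - F1 (\<alpha>-1) z)
     \<le> \<Lambda> y ^ 2 / (4 * k * U y powr \<alpha>) / exp \<tau>"
      by (rule react1[OF al k Upos r z exp_gt_zero])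
    moreover have e: "\<Lambda> y ^ 2 / (4 * k * U y powr \<alpha>) / exp \<tau> = exp (-\<tau>) * (\<Lambda> y ^ 2 / (4 * k * U y powr \<alpha>))"
      by (rule div_exp)
    ultimately have fin: "\<alpha> * \<Lambda> y * ((z powr (\<alpha>-1) - r powr (\<alpha>-1)) / (\<alpha>-1))
     + exp \<tau> * \<alpha> * k * (U y powr \<alpha> * z powr \<alpha> - U y powr \<alpha> * r powr \<alpha>) * (F1 (\<alpha>-1) r - F1 (\<alpha>-1) z)
     \<le> exp (-\<tau>) * (\<Lambda> y ^ 2 / (4 * k * U y powr \<alpha>))"
      by (rule ord_le_eq_trans)
    show "\<alpha> * \<Lambda> y * (((v \<tau> y / U y) powr (\<alpha> - 1) - (u \<tau> y / U y) powr (\<alpha> - 1)) / (\<alpha> - 1))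
         + exp \<tau> * \<alpha> * k * (v \<tau> y powr \<alpha> - u \<tau> y powr \<alpha>) * (F1 (\<alpha> - 1) (u \<tau> y / U y) - F1 (\<alpha> - 1) (v \<tau> y / U y))
         \<le> exp (-\<tau>) * (\<Lambda> y ^ 2 / (4 * k * U y powr \<alpha>))"
      using fin unfolding uu vv r_def z_def .
  qed
  then show ?thesis by (simp only: integral_mult_right_zero)
qed

lemma sqrt8: "sqrt 8 = 2 * sqrt (2::real)"
proof -
  have "sqrt 8 = sqrt (2^2 * 2::real)" by simp
  also have "\<dots> = 2 * sqrt 2" by (simp only: real_sqrt_mult real_sqrt_abs)
  finally show ?thesis .
qed

lemma case_ii:
  fixes d1 d2 k Am Ap :: real and U V \<Lambda> :: "real \<Rightarrow> real" and u v :: "real \<Rightarrow> real \<Rightarrow> real"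
  assumes d1: "0 < d1" and d2: "0 < d2" and k: "0 < k"
    and prof: "similarity_profile d1 d2 1 1 Am Ap U V \<Lambda>"
    and sol: "scaled_solution d1 d2 k 1 1 Am Ap U V (1/2) u v"
    and t: "0 < \<tau>"
  shows "deriv (\<lambda>t. rel_entropy (1/2) U V (u t) (v t)) \<tau>
           \<le> - (1/2 - (SUP y. \<bar>\<Lambda> y / U y\<bar>) ^ 2 / (k * sqrt 8))
               * rel_entropy (1/2) U V (u \<tau>) (v \<tau>)
             + exp (-\<tau>) * (LINT y|lborel. (11 + sqrt 2) / (14 * k) * (\<Lambda> y ^ 2 / U y))"
proof -
  have al1: "1 \<le> (1::real)" by simp
  have Upos: "\<And>y. 0 < U y" by (rule prof_Upos(1)[OF d1 d2 al1 prof])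
  have VU: "V = U" by (rule prof_VU[OF d1 d2 al1 prof])
  have pos: "\<And>y. 0 < u \<tau> y \<and> 0 < v \<tau> y" using sol t unfolding scaled_solution_def by auto
  have intd: "integrable lborel (Defs.entropy_density (1/2) U V (u \<tau>) (v \<tau>))"
    using sol t unfolding scaled_solution_def by auto
  define \<mu> where "\<mu> = (SUP y. \<bar>\<Lambda> y / U y\<bar>) ^ 2 / (k * sqrt 8)"
  obtain c :: real where c: "0 < c" "\<And>y. c \<le> U y" using prof_bounds[OF d1 d2 al1 prof] by blast
  obtain M where M: "\<And>y. \<bar>\<Lambda> y\<bar> \<le> M" using prof_Lam_bound[OF d1 d2 al1 prof] by blast
  have bdd: "bdd_above (range (\<lambda>y. \<bar>\<Lambda> y / U y\<bar>))"
  proof (rule bdd_aboveI2)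
    fix y
    have "\<bar>\<Lambda> y / U y\<bar> = \<bar>\<Lambda> y\<bar> / U y" using Upos[of y] by simp
    also have "\<dots> \<le> M / c"
      by (rule frac_le) (use M c Upos in \<open>auto intro: order_trans[OF abs_ge_zero M]\<close>)
    finally show "\<bar>\<Lambda> y / U y\<bar> \<le> M / c" .
  qed
  have mu: "(\<Lambda> y / U y)^2 / (2 * sqrt 2 * k) \<le> \<mu>" for y
  proof -
    have "\<bar>\<Lambda> y / U y\<bar> \<le> (SUP y. \<bar>\<Lambda> y / U y\<bar>)" by (rule cSUP_upper[OF _ bdd]) simp
    then have "\<bar>\<Lambda> y / U y\<bar>^2 \<le> (SUP y. \<bar>\<Lambda> y / U y\<bar>)^2" by (rule power_mono) simp
    then have "(\<Lambda> y / U y)^2 \<le> (SUP y. \<bar>\<Lambda> y / U y\<bar>)^2" by (simp only: power2_abs)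
    then show ?thesis unfolding \<mu>_def sqrt8 using k by (simp add: divide_right_mono mult.commute mult.left_commute)
  qed
  have int1: "integrable lborel (\<lambda>y. \<Lambda> y ^ 2 / (4 * k * U y powr 1))"
    by (rule prof_int1[OF d1 d2 al1 prof k])
  have int2: "integrable lborel (\<lambda>y. (11 + sqrt 2) / (14 * k) * (\<Lambda> y ^ 2 / U y))"
  proof -
    have "integrable lborel (\<lambda>y. ((11 + sqrt 2) / (14 * k) * (4 * k)) * (\<Lambda> y ^ 2 / (4 * k * U y powr 1)))"
      by (rule integrable_mult_right) (rule int1)
    moreover have "((11 + sqrt 2) / (14 * k) * (4 * k)) * (\<Lambda> y ^ 2 / (4 * k * U y powr 1)) = (11 + sqrt 2) / (14 * k) * (\<Lambda> y ^ 2 / U y)" for y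
      using k Upos[of y] by (simp add: field_simps)
    ultimately show ?thesis by simp
  qed
  have "deriv (\<lambda>s. rel_entropy (1/2) U V (u s) (v s)) \<tau> \<le> -(1/2) * rel_entropy (1/2) U V (u \<tau>) (v \<tau>)
      + (LINT y|lborel. \<mu> * Defs.entropy_density (1/2) U V (u \<tau>) (v \<tau>) y + exp (-\<tau>) * ((11 + sqrt 2) / (14 * k) * (\<Lambda> y ^ 2 / U y)))"
  proof (rule main_estimate[OF d1 d2 al1 k prof sol _ t])
    show "(1/2::real) \<noteq> 0" by simp
    show "integrable lborel (\<lambda>y. \<mu> * Defs.entropy_density (1/2) U V (u \<tau>) (v \<tau>) y + exp (-\<tau>) * ((11 + sqrt 2) / (14 * k) * (\<Lambda> y ^ 2 / U y)))"
      by (intro Bochner_Integration.integrable_add integrable_mult_right intd int2)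
    fix y
    define a where "a = sqrt (u \<tau> y / U y)"
    define b where "b = sqrt (v \<tau> y / U y)"
    define w where "w = \<Lambda> y / U y"
    have Uy: "0 < U y" by (rule Upos)
    have a: "0 < a" and b: "0 < b" using pos[of y] Uy by (simp_all add: a_def b_def)
    have ra: "u \<tau> y / U y = a^2" and rb: "v \<tau> y / U y = b^2"
      using pos[of y] Uy by (simp_all add: a_def b_def)
    have uu: "u \<tau> y = U y * a^2" and vv: "v \<tau> y = U y * b^2" using ra rb Uy by (simp_all add: field_simps)
    have Lw: "\<Lambda> y = w * U y" using Uy by (simp add: w_def)
    have ph: "(x^2) powr (1/2) = x" if "0 < x" for x :: real
      using that by (simp add: powr_half_sqrt)
    have mh: "(x^2) powr (1/2 - 1) = 1 / x" if "0 < x" for x :: real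
    proof -
      have "(x^2) powr (1/2 - 1) = (x^2) powr (- (1/2))" by simp
      also have "\<dots> = inverse ((x^2) powr (1/2))" by (rule powr_minus)
      also have "\<dots> = 1 / x" unfolding ph[OF that] by (rule inverse_eq_divide)
      finally show ?thesis .
    qed
    have F1x: "F1 (1/2) (x^2) = 2 - 2 / x" if "0 < x" for x :: real
    proof -
      have "F1 (1/2) (x^2) = ((x^2) powr (1/2 - 1) - 1) / (1/2 - 1)" by (simp add: F1_def)
      also have "\<dots> = (1/x - 1) / (1/2 - 1)" unfolding mh[OF that] ..
      also have "\<dots> = 2 - 2 / x" using that by (simp add: field_simps)
      finally show ?thesis .
    qed
    have Fpx: "Fp (1/2) (x^2) = 2 * (x - 1)^2" if "0 < x" for x :: real
    proof -
      have "Fp (1/2) (x^2) = ((x^2) powr (1/2) - 1/2 * x^2 + 1/2 - 1) / (1/2 * (1/2 - 1))" by (simp add: Fp_def)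
      also have "\<dots> = (x - 1/2 * x^2 + 1/2 - 1) / (1/2 * (1/2 - 1))" unfolding ph[OF that] ..
      also have "\<dots> = 2 * (x - 1)^2" by (simp add: field_simps power2_eq_square)
      finally show ?thesis .
    qed
    have F1a: "F1 (1/2) (a^2) = 2 - 2 / a" by (rule F1x[OF a])
    have F1b: "F1 (1/2) (b^2) = 2 - 2 / b" by (rule F1x[OF b])
    have Fpa: "Fp (1/2) (a^2) = 2 * (a - 1)^2" by (rule Fpx[OF a])
    have Fpb: "Fp (1/2) (b^2) = 2 * (b - 1)^2" by (rule Fpx[OF b])
    have E: "1 \<le> exp \<tau>" using t by simp
    have core: "2*(w*U y)*(b-a) - 2*exp \<tau>*k*U y*((a+b)/(a*b))*(b-a)^2
      \<le> \<mu>*(2*U y*((a-1)^2+(b-1)^2)) + (1/exp \<tau>)*((11+sqrt 2)/(14*k)*(w^2*U y))"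
      by (rule react2core[OF a b k Uy E]) (use mu[of y] in \<open>simp add: w_def\<close>)
    have s1: "(v \<tau> y / U y) powr (1/2) = b" "(u \<tau> y / U y) powr (1/2) = a"
      unfolding ra rb using a b by (simp_all add: ph)
    have s2: "v \<tau> y powr 1 = U y * b^2" "u \<tau> y powr 1 = U y * a^2"
      using pos[of y] uu vv by simp_all
    have s3: "F1 (1/2) (u \<tau> y / U y) = 2 - 2 / a" "F1 (1/2) (v \<tau> y / U y) = 2 - 2 / b"
      unfolding ra rb F1a F1b by simp_all
    have alg: "(U y * b^2 - U y * a^2) * ((2 - 2 / a) - (2 - 2 / b)) = - (2 * U y * ((a+b)/(a*b)) * (b-a)^2)"
      using a b by (simp add: field_simps power2_eq_square)
    have lhs: "1 * \<Lambda> y * (((v \<tau> y / U y) powr (1/2) - (u \<tau> y / U y) powr (1/2)) / (1/2))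
         + exp \<tau> * 1 * k * (v \<tau> y powr 1 - u \<tau> y powr 1) * (F1 (1/2) (u \<tau> y / U y) - F1 (1/2) (v \<tau> y / U y))
       = 2*(w*U y)*(b-a) - 2*exp \<tau>*k*U y*((a+b)/(a*b))*(b-a)^2"
    proof -
      have "exp \<tau> * 1 * k * (U y * b^2 - U y * a^2) * ((2 - 2 / a) - (2 - 2 / b))
          = exp \<tau> * k * ((U y * b^2 - U y * a^2) * ((2 - 2 / a) - (2 - 2 / b)))" by simp
      also have "\<dots> = - (2*exp \<tau>*k*U y*((a+b)/(a*b))*(b-a)^2)" unfolding alg by simp
      finally have e: "exp \<tau> * 1 * k * (U y * b^2 - U y * a^2) * ((2 - 2 / a) - (2 - 2 / b))
          = - (2*exp \<tau>*k*U y*((a+b)/(a*b))*(b-a)^2)" .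
      show ?thesis unfolding s1 s2 s3 e Lw by simp
    qed
    have rhs: "\<mu> * Defs.entropy_density (1/2) U V (u \<tau>) (v \<tau>) y + exp (-\<tau>) * ((11 + sqrt 2) / (14 * k) * (\<Lambda> y ^ 2 / U y))
       = \<mu>*(2*U y*((a-1)^2+(b-1)^2)) + (1/exp \<tau>)*((11+sqrt 2)/(14*k)*(w^2*U y))"
    proof -
      have "Defs.entropy_density (1/2) U V (u \<tau>) (v \<tau>) y = 2*U y*((a-1)^2+(b-1)^2)"
        unfolding Defs.entropy_density_def VU ra rb Fpa Fpb by (simp add: algebra_simps)
      moreover have "\<Lambda> y ^ 2 / U y = w^2 * U y" unfolding Lw using Uy by (simp add: power2_eq_square)
      moreover have "exp (-\<tau>) = 1 / exp \<tau>" by (simp add: exp_minus divide_inverse)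
      ultimately show ?thesis by simp
    qed
    show "1 * \<Lambda> y * (((v \<tau> y / U y) powr (1/2) - (u \<tau> y / U y) powr (1/2)) / (1/2))
         + exp \<tau> * 1 * k * (v \<tau> y powr 1 - u \<tau> y powr 1) * (F1 (1/2) (u \<tau> y / U y) - F1 (1/2) (v \<tau> y / U y))
         \<le> \<mu> * Defs.entropy_density (1/2) U V (u \<tau>) (v \<tau>) y + exp (-\<tau>) * ((11 + sqrt 2) / (14 * k) * (\<Lambda> y ^ 2 / U y))"
      unfolding lhs rhs by (rule core)
  qed
  also have "(LINT y|lborel. \<mu> * Defs.entropy_density (1/2) U V (u \<tau>) (v \<tau>) y + exp (-\<tau>) * ((11 + sqrt 2) / (14 * k) * (\<Lambda> y ^ 2 / U y)))
     = \<mu> * rel_entropy (1/2) U V (u \<tau>) (v \<tau>) + exp (-\<tau>) * (LINT y|lborel. (11 + sqrt 2) / (14 * k) * (\<Lambda> y ^ 2 / U y))"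
  proof -
    have "rel_entropy (1/2) U V (u \<tau>) (v \<tau>) = (LINT y|lborel. Defs.entropy_density (1/2) U V (u \<tau>) (v \<tau>) y)"
      unfolding rel_entropy_def Defs.entropy_density_def ..
    moreover have i1: "integrable lborel (\<lambda>y. \<mu> * Defs.entropy_density (1/2) U V (u \<tau>) (v \<tau>) y)"
      by (rule integrable_mult_right) (rule intd)
    moreover have i2: "integrable lborel (\<lambda>y. exp (-\<tau>) * ((11 + sqrt 2) / (14 * k) * (\<Lambda> y ^ 2 / U y)))"
      by (rule integrable_mult_right) (rule int2)
    ultimately show ?thesis
      by (simp only: Bochner_Integration.integral_add[OF i1 i2] integral_mult_right_zero)
  qed
  finally have fin: "deriv (\<lambda>s. rel_entropy (1/2) U V (u s) (v s)) \<tau> \<le> -(1/2) * rel_entropy (1/2) U V (u \<tau>) (v \<tau>)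
      + (\<mu> * rel_entropy (1/2) U V (u \<tau>) (v \<tau>) + exp (-\<tau>) * (LINT y|lborel. (11 + sqrt 2) / (14 * k) * (\<Lambda> y ^ 2 / U y)))" .
  have "\<And>E Z :: real. -(1/2) * E + (\<mu> * E + Z) = - (1/2 - \<mu>) * E + Z" by (simp add: algebra_simps)
  then show ?thesis using fin unfolding \<mu>_def by (simp only:)
qed

theorem mainTheorem14:
  fixes d1 d2 k \<alpha> \<beta> Am Ap :: real
    and U V \<Lambda> :: "real \<Rightarrow> real"
    and u v :: "real \<Rightarrow> real \<Rightarrow> real"
  assumes "0 < d1" "0 < d2" "0 < k" "1 \<le> \<alpha>" "1 \<le> \<beta>" "0 < Am" "0 < Ap"
    and "\<alpha> = \<beta>"
    and "similarity_profile d1 d2 \<alpha> \<beta> Am Ap U V \<Lambda>"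
  shows
    "(2 \<le> \<alpha> \<longrightarrow> scaled_solution d1 d2 k \<alpha> \<beta> Am Ap U V (\<alpha> - 1) u v \<longrightarrow>
        (\<forall>\<tau>>0. deriv (\<lambda>t. rel_entropy (\<alpha> - 1) U V (u t) (v t)) \<tau>
           \<le> - (1/2) * rel_entropy (\<alpha> - 1) U V (u \<tau>) (v \<tau>)
             + exp (-\<tau>) * (LINT y|lborel. \<Lambda> y ^ 2 / (4 * k * U y powr \<alpha>)))) \<and>
     (\<alpha> = 1 \<longrightarrow> scaled_solution d1 d2 k \<alpha> \<beta> Am Ap U V (1/2) u v \<longrightarrow>
        (\<forall>\<tau>>0. deriv (\<lambda>t. rel_entropy (1/2) U V (u t) (v t)) \<tau>
           \<le> - (1/2 - (SUP y. \<bar>\<Lambda> y / U y\<bar>) ^ 2 / (k * sqrt 8))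
               * rel_entropy (1/2) U V (u \<tau>) (v \<tau>)
             + exp (-\<tau>) * (LINT y|lborel. (11 + sqrt 2) / (14 * k) * (\<Lambda> y ^ 2 / U y))))"
proof -
  have ab: "\<beta> = \<alpha>" using assms(8) by simp
  have prof: "similarity_profile d1 d2 \<alpha> \<alpha> Am Ap U V \<Lambda>" using assms(9) unfolding ab .
  show ?thesis unfolding ab
  proof (intro conjI impI allI)
    fix \<tau> :: real
    assume "2 \<le> \<alpha>" "scaled_solution d1 d2 k \<alpha> \<alpha> Am Ap U V (\<alpha> - 1) u v" "0 < \<tau>"
    then show "deriv (\<lambda>t. rel_entropy (\<alpha> - 1) U V (u t) (v t)) \<tau>
           \<le> - (1/2) * rel_entropy (\<alpha> - 1) U V (u \<tau>) (v \<tau>)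
             + exp (-\<tau>) * (LINT y|lborel. \<Lambda> y ^ 2 / (4 * k * U y powr \<alpha>))"
      by (rule case_i[OF assms(1,2,3) _ prof])
  next
    fix \<tau> :: real
    assume a1: "\<alpha> = 1" and "scaled_solution d1 d2 k \<alpha> \<alpha> Am Ap U V (1/2) u v" "0 < \<tau>"
    then have s1: "scaled_solution d1 d2 k 1 1 Am Ap U V (1/2) u v" by simp
    have p1: "similarity_profile d1 d2 1 1 Am Ap U V \<Lambda>" using prof unfolding a1 .
    show "deriv (\<lambda>t. rel_entropy (1/2) U V (u t) (v t)) \<tau>
           \<le> - (1/2 - (SUP y. \<bar>\<Lambda> y / U y\<bar>) ^ 2 / (k * sqrt 8))
               * rel_entropy (1/2) U V (u \<tau>) (v \<tau>)
             + exp (-\<tau>) * (LINT y|lborel. (11 + sqrt 2) / (14 * k) * (\<Lambda> y ^ 2 / U y))"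
      by (rule case_ii[OF assms(1,2,3) p1 s1 \<open>0 < \<tau>\<close>])
  qed
qed


end
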